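(* The operator $-\mathfrak{L}^{\mathrm{Rob}}:\mathfrak{D}^{\mathrm{Rob}}\to L^2(\mathbb{T}^d)$ is symmetric and nonnegative, i.e. $\langle H,-\mathfrak{L}^{\mathrm{Rob}}G\rangle=\langle-\mathfrak{L}^{\mathrm{Rob}}H,G\rangle$ and $\langle H,-\mathfrak{L}^{\mathrm{Rob}}H\rangle\ge0$ for all $H,G\in\mathfrak{D}^{\mathrm{Rob}}$, where $\langle\cdot,\cdot\rangle$ is the $L^2(\mathbb{T}^d)$ inner product.
   Context: $\mathbb{T}^d=[0,1)^d$ with periodic boundary; $e_1,\dots,e_d$ canonical basis of $\mathbb{R}^d$. $\Lambda\subset\mathbb{T}^d$ is a simply connected closed region with smooth $(d-1)$-dimensional boundary $\partial\Lambda$ and unit exterior normal $\vec\zeta(u)$. $\mathfrak{D}^{\mathrm{Rob}}$ is the set of $H=h_1\mathbf{1}_\Lambda+h_2\mathbf{1}_{\Lambda^\complement}$ with $h_1,h_2\in C^2(\mathbb{T}^d)$ satisfying, for all $u\in\partial\Lambda$, $\langle\nabla h_1(u),\vec\zeta(u)\rangle=\langle\nabla h_2(u),\vec\zeta(u)\rangle=(h_2(u)-h_1(u))\sum_{j=1}^d|\langle\vec\zeta(u),e_j\rangle|$. $\mathfrak{L}^{\mathrm{Rob}}H=\Delta h_1$ on $\Lambda$ and $\Delta h_2$ on $\Lambda^\complement$. *)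

theory Defs
  imports "HOL-Analysis.Analysis"
begin

definition unit_cube :: "'a::euclidean_space set" where
  "unit_cube = {x. \<forall>b\<in>Basis. 0 \<le> x \<bullet> b \<and> x \<bullet> b < 1}"

text \<open>Coordinate-wise fractional part: the quotient map from R^d onto the torus
  (realised as the cube [0,1)^d).\<close>
definition vfrac :: "'a::euclidean_space \<Rightarrow> 'a" where
  "vfrac x = (\<Sum>b\<in>Basis. frac (x \<bullet> b) *\<^sub>R b)"

lemma istopology_torus:
  "istopology (\<lambda>U. U \<subseteq> (unit_cube::'a::euclidean_space set) \<and> open (vfrac -` U))"
  unfolding istopology_def
  by (auto simp: vimage_Int vimage_Union intro!: open_Int open_UN)

text \<open>Quotient topology of R^d / Z^d transported to the cube [0,1)^d.\<close>
definition torus_top :: "'a::euclidean_space topology" where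
  "torus_top = topology (\<lambda>U. U \<subseteq> unit_cube \<and> open (vfrac -` U))"

definition simply_connected_space :: "'a topology \<Rightarrow> bool" where
  "simply_connected_space X \<longleftrightarrow>
     (\<forall>p q. pathin X p \<and> p 1 = p 0 \<and> pathin X q \<and> q 1 = q 0 \<longrightarrow>
        homotopic_with (\<lambda>r. r 1 = r 0) (top_of_set {0..1}) X p q)"

section \<open>Functions on the torus = Z^d-periodic functions on R^d\<close>

definition periodic :: "('a::euclidean_space \<Rightarrow> real) \<Rightarrow> bool" where
  "periodic f \<longleftrightarrow> (\<forall>x. \<forall>b\<in>Basis. f (x + b) = f x)"

fun dd :: "'a::euclidean_space list \<Rightarrow> ('a \<Rightarrow> real) \<Rightarrow> 'a \<Rightarrow> real" where
  "dd [] f = f"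
| "dd (v # vs) f = (\<lambda>x. frechet_derivative (dd vs f) (at x) v)"

definition C2 :: "('a::euclidean_space \<Rightarrow> real) \<Rightarrow> bool" where
  "C2 f \<longleftrightarrow> (\<forall>x. f differentiable (at x)) \<and>
     (\<forall>b\<in>Basis. \<forall>x. dd [b] f differentiable (at x)) \<and>
     (\<forall>b\<in>Basis. \<forall>c\<in>Basis. continuous_on UNIV (dd [b, c] f))"

definition smooth :: "('a::euclidean_space \<Rightarrow> real) \<Rightarrow> bool" where
  "smooth f \<longleftrightarrow> (\<forall>vs. set vs \<subseteq> Basis \<longrightarrow> (\<forall>x. dd vs f differentiable (at x)))"

definition grad :: "('a::euclidean_space \<Rightarrow> real) \<Rightarrow> 'a \<Rightarrow> 'a" where
  "grad f x = (\<Sum>b\<in>Basis. dd [b] f x *\<^sub>R b)"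

definition laplacian :: "('a::euclidean_space \<Rightarrow> real) \<Rightarrow> 'a \<Rightarrow> real" where
  "laplacian f x = (\<Sum>b\<in>Basis. dd [b, b] f x)"

definition defining_function :: "('a::euclidean_space \<Rightarrow> real) \<Rightarrow> 'a set \<Rightarrow> bool" where
  "defining_function \<phi> \<Lambda> \<longleftrightarrow> periodic \<phi> \<and> smooth \<phi> \<and>
     \<Lambda> = {x\<in>unit_cube. \<phi> x \<le> 0} \<and>
     (\<forall>x. \<phi> x = 0 \<longrightarrow> grad \<phi> x \<noteq> 0)"

definition ext_normal :: "('a::euclidean_space \<Rightarrow> real) \<Rightarrow> 'a \<Rightarrow> 'a" where
  "ext_normal \<phi> u = (1 / norm (grad \<phi> u)) *\<^sub>R grad \<phi> u"

text \<open>Pairs (h1,h2) representing H = h1 1_\<Lambda> + h2 1_{\<Lambda>^c} in D^Rob.\<close>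
definition rob_pair :: "'a set \<Rightarrow> ('a \<Rightarrow> 'a) \<Rightarrow> ('a::euclidean_space \<Rightarrow> real) \<Rightarrow> ('a \<Rightarrow> real) \<Rightarrow> bool" where
  "rob_pair \<Lambda> \<zeta> h1 h2 \<longleftrightarrow> periodic h1 \<and> periodic h2 \<and> C2 h1 \<and> C2 h2 \<and>
     (\<forall>u\<in>torus_top frontier_of \<Lambda>.
        grad h1 u \<bullet> \<zeta> u = (h2 u - h1 u) * (\<Sum>j\<in>Basis. \<bar>\<zeta> u \<bullet> j\<bar>) \<and>
        grad h2 u \<bullet> \<zeta> u = (h2 u - h1 u) * (\<Sum>j\<in>Basis. \<bar>\<zeta> u \<bullet> j\<bar>))"

definition glue :: "'a set \<Rightarrow> ('a \<Rightarrow> real) \<Rightarrow> ('a \<Rightarrow> real) \<Rightarrow> 'a \<Rightarrow> real" where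
  "glue \<Lambda> h1 h2 x = (if x \<in> \<Lambda> then h1 x else h2 x)"

definition L_rob :: "'a set \<Rightarrow> ('a::euclidean_space \<Rightarrow> real) \<Rightarrow> ('a \<Rightarrow> real) \<Rightarrow> 'a \<Rightarrow> real" where
  "L_rob \<Lambda> h1 h2 = glue \<Lambda> (laplacian h1) (laplacian h2)"

definition torus_inner :: "('a::euclidean_space \<Rightarrow> real) \<Rightarrow> ('a \<Rightarrow> real) \<Rightarrow> real" where
  "torus_inner F G = (LINT x:unit_cube|lborel. F x * G x)"

end

theory Submission
  imports Defs
begin

lemma periodic_int:
  assumes "periodic f" "b \<in> Basis"
  shows "f (x + of_int k *\<^sub>R b) = f x"
proof -
  have pos: "f (y + real n *\<^sub>R b) = f y" for y n
  proof (induction n)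
    case (Suc n)
    have "f (y + real (Suc n) *\<^sub>R b) = f ((y + real n *\<^sub>R b) + b)"
      by (simp add: algebra_simps)
    also have "\<dots> = f (y + real n *\<^sub>R b)" using assms unfolding periodic_def by blast
    finally show ?case using Suc by simp
  qed simp
  show ?thesis
  proof (cases "k \<ge> 0")
    case True
    then have k: "of_int k = real (nat k)" by simp
    show ?thesis unfolding k by (rule pos)
  next
    case False
    then have k: "of_int k = - real (nat (-k))" by simp
    have "f (x + of_int k *\<^sub>R b) = f ((x + of_int k *\<^sub>R b) + real (nat (-k)) *\<^sub>R b)" by (rule pos[symmetric])
    also have "(x + of_int k *\<^sub>R b) + real (nat (-k)) *\<^sub>R b = x" unfolding k by (simp add: algebra_simps)
    finally show ?thesis .
  qed
qed

lemma periodic_sum: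
  assumes "periodic f" "B \<subseteq> Basis"
  shows "f (x + (\<Sum>b\<in>B. of_int (k b) *\<^sub>R b)) = f x"
proof -
  have "finite B" using assms(2) finite_Basis finite_subset by blast
  then show ?thesis using assms(2)
  proof (induction B arbitrary: x)
    case (insert c B)
    have "f (x + (\<Sum>b\<in>insert c B. of_int (k b) *\<^sub>R b)) = f ((x + (\<Sum>b\<in>B. of_int (k b) *\<^sub>R b)) + of_int (k c) *\<^sub>R c)"
      using insert by (simp add: algebra_simps)
    also have "\<dots> = f (x + (\<Sum>b\<in>B. of_int (k b) *\<^sub>R b))" using periodic_int[OF assms(1), of c] insert by auto
    finally show ?case using insert.IH insert.prems by auto
  qed simp
qed

lemma vfrac_eq: "vfrac x = x + (\<Sum>b\<in>Basis. of_int (- floor (x \<bullet> b)) *\<^sub>R b)"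
proof -
  have "x = (\<Sum>b\<in>Basis. (x \<bullet> b) *\<^sub>R b)" by (simp add: euclidean_representation)
  then have "x + (\<Sum>b\<in>Basis. of_int (- floor (x \<bullet> b)) *\<^sub>R b) = (\<Sum>b\<in>Basis. (x \<bullet> b - of_int (floor (x \<bullet> b))) *\<^sub>R b)"
    by (metis (no_types, lifting) ext of_int_minus scaleR_left_diff_distrib sum.cong sum.distrib diff_conv_add_uminus scaleR_left.add)
  then show ?thesis unfolding vfrac_def frac_def by simp
qed

lemma periodic_vfrac: "periodic f \<Longrightarrow> f (vfrac x) = f x"
  using periodic_sum[of f Basis x "\<lambda>b. - floor (x \<bullet> b)"] vfrac_eq by (metis order_refl)

lemma vfrac_inner: "b \<in> Basis \<Longrightarrow> vfrac x \<bullet> b = frac (x \<bullet> b)"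
proof -
  assume b: "b \<in> Basis"
  have "vfrac x \<bullet> b = (\<Sum>c\<in>Basis. if c = b then frac (x \<bullet> b) else 0)"
    unfolding vfrac_def inner_sum_left by (rule sum.cong) (auto simp: inner_Basis b)
  then show ?thesis using b by simp
qed

lemma vfrac_in_cube: "vfrac x \<in> unit_cube"
  unfolding unit_cube_def by (simp add: vfrac_inner frac_lt_1)

lemma vfrac_cube: "x \<in> unit_cube \<Longrightarrow> vfrac x = x"
proof -
  assume x: "x \<in> unit_cube"
  have *: "vfrac x \<bullet> b = x \<bullet> b" if b: "b \<in> Basis" for b
  proof -
    have "0 \<le> x \<bullet> b" "x \<bullet> b < 1" using x b unfolding unit_cube_def by auto
    then show ?thesis using vfrac_inner[OF b] frac_eq by simp
  qed
  show ?thesis by (rule euclidean_eqI) (rule *)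
qed

lemma unit_cube_sub_cbox: "unit_cube \<subseteq> cbox 0 One"
  unfolding unit_cube_def cbox_def by (auto simp: less_imp_le)

lemma openin_torus: "openin torus_top U \<longleftrightarrow> U \<subseteq> unit_cube \<and> open (vfrac -` U)"
  unfolding torus_top_def topology_inverse'[OF istopology_torus] by (rule refl)

lemma topspace_torus: "topspace (torus_top :: 'a::euclidean_space topology) = unit_cube"
proof -
  have "vfrac -` (unit_cube :: 'a set) = UNIV" using vfrac_in_cube by blast
  then have "openin torus_top (unit_cube :: 'a set)" by (simp add: openin_torus)
  moreover have "topspace torus_top \<subseteq> unit_cube" unfolding topspace_def openin_torus by blast
  ultimately show ?thesis using openin_subset by blast
qed

lemma frechet_grad:
  assumes "f differentiable (at x)"
  shows "frechet_derivative f (at x) v = grad f x \<bullet> v"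
proof -
  have lin: "linear (frechet_derivative f (at x))"
    using assms frechet_derivative_works has_derivative_linear by blast
  have "frechet_derivative f (at x) v = frechet_derivative f (at x) (\<Sum>b\<in>Basis. (v \<bullet> b) *\<^sub>R b)"
    by (simp add: euclidean_representation)
  also have "\<dots> = (\<Sum>b\<in>Basis. (v \<bullet> b) * frechet_derivative f (at x) b)"
    using lin by (simp add: linear_sum linear_cmul)
  also have "\<dots> = grad f x \<bullet> v"
    unfolding grad_def inner_sum_left by (simp add: mult.commute inner_commute)
  finally show ?thesis .
qed

lemma grad_inner_b: "b \<in> Basis \<Longrightarrow> grad f x \<bullet> b = dd [b] f x"
proof -
  assume b: "b \<in> Basis"
  have "grad f x \<bullet> b = (\<Sum>c\<in>Basis. if c = b then dd [b] f x else 0)"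
    unfolding grad_def inner_sum_left by (rule sum.cong) (auto simp: inner_Basis b)
  then show ?thesis using b by simp
qed

lemma grad_inner: "grad f x \<bullet> grad g x = (\<Sum>b\<in>Basis. dd [b] f x * dd [b] g x)"
proof -
  have "grad f x \<bullet> grad g x = (\<Sum>b\<in>Basis. (grad f x \<bullet> b) * (grad g x \<bullet> b))"
    by (rule euclidean_inner)
  also have "\<dots> = (\<Sum>b\<in>Basis. dd [b] f x * dd [b] g x)"
    by (rule sum.cong) (simp_all add: grad_inner_b)
  finally show ?thesis .
qed

lemma smooth_diff: "smooth f \<Longrightarrow> f differentiable (at x)"
  unfolding smooth_def by (metis dd.simps(1) empty_set empty_subsetI)

lemma frontier_pt:
  assumes df: "defining_function \<phi> \<Lambda>" and x: "x \<in> unit_cube" and z: "\<phi> x = 0"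
  shows "x \<in> torus_top frontier_of \<Lambda>"
proof -
  have pphi: "periodic \<phi>" and sm: "smooth \<phi>" and L: "\<Lambda> = {x\<in>unit_cube. \<phi> x \<le> 0}"
    and gz: "\<And>x. \<phi> x = 0 \<Longrightarrow> grad \<phi> x \<noteq> 0"
    using df unfolding defining_function_def by auto
  have xL: "x \<in> \<Lambda>" using L x z by simp
  have "\<Lambda> \<subseteq> topspace torus_top" using L topspace_torus by auto
  then have xc: "x \<in> torus_top closure_of \<Lambda>" using closure_of_subset xL by blast
  have "x \<notin> torus_top interior_of \<Lambda>"
  proof
    assume "x \<in> torus_top interior_of \<Lambda>"
    then obtain T where T: "openin torus_top T" "x \<in> T" "T \<subseteq> \<Lambda>" unfolding interior_of_def by blast
    have oT: "open (vfrac -` T)" using T(1) openin_torus by blast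
    have "x \<in> vfrac -` T" using T(2) vfrac_cube[OF x] by simp
    then obtain r where r: "r > 0" "ball x r \<subseteq> vfrac -` T" using oT open_contains_ball by blast
    define v where "v = grad \<phi> x"
    have vpos: "v \<bullet> v > 0" using gz[OF z] v_def by simp
    have "\<phi> differentiable (at (x + t *\<^sub>R v))" for t using smooth_diff[OF sm] by blast
    have "((\<lambda>t. \<phi> (x + t *\<^sub>R v)) has_real_derivative (grad \<phi> x \<bullet> v)) (at 0)"
    proof -
      have d: "(\<phi> has_derivative frechet_derivative \<phi> (at x)) (at x)"
        using smooth_diff[OF sm] frechet_derivative_works by blast
      have "((\<lambda>t. x + t *\<^sub>R v) has_derivative (\<lambda>t. t *\<^sub>R v)) (at 0)"
        by (auto intro!: derivative_eq_intros)
      from has_derivative_compose[OF this] d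
      have "((\<lambda>t. \<phi> (x + t *\<^sub>R v)) has_derivative (\<lambda>t. frechet_derivative \<phi> (at x) (t *\<^sub>R v))) (at 0)"
        by simp
      moreover have "frechet_derivative \<phi> (at x) (t *\<^sub>R v) = t * (grad \<phi> x \<bullet> v)" for t
        using frechet_grad[OF smooth_diff[OF sm]] by simp
      ultimately show ?thesis by (simp add: has_field_derivative_def mult.commute[of _ "grad \<phi> x \<bullet> v"])
    qed
    from DERIV_pos_inc_right[OF this] vpos v_def
    obtain d where d: "d > 0" "\<And>h. h > 0 \<Longrightarrow> h < d \<Longrightarrow> \<phi> (x + 0 *\<^sub>R v) < \<phi> (x + (0 + h) *\<^sub>R v)"
      by auto
    define h where "h = min (d/2) (r / (2 * norm v))"
    have nv: "norm v > 0" using vpos by simp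
    have hpos: "h > 0" "h < d" using d r nv h_def by auto
    have "norm (h *\<^sub>R v) = h * norm v" using hpos by simp
    also have "\<dots> \<le> r / (2 * norm v) * norm v"
      using nv h_def by (intro mult_right_mono) auto
    also have "\<dots> = r/2" using nv by simp
    finally have "dist x (x + h *\<^sub>R v) < r" using r by (simp add: dist_norm)
    then have "x + h *\<^sub>R v \<in> vfrac -` T" using r by auto
    then have "vfrac (x + h *\<^sub>R v) \<in> \<Lambda>" using T(3) by auto
    then have "\<phi> (x + h *\<^sub>R v) \<le> 0" using L periodic_vfrac[OF pphi] by auto
    moreover have "\<phi> (x + h *\<^sub>R v) > 0" using d(2)[OF hpos] z by simp
    ultimately show False by simp
  qed
  then show ?thesis using xc unfolding frontier_of_def by blast
qed

lemma compact_level: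
  fixes P F :: "'a::euclidean_space \<Rightarrow> real"
  assumes pP: "periodic P" and pF: "periodic F" and cP: "continuous_on UNIV P" and cF: "continuous_on UNIV F"
    and H: "\<forall>x\<in>unit_cube. P x = 0 \<longrightarrow> F x > 0"
  shows "\<exists>e>0. \<forall>x. \<bar>P x\<bar> < e \<longrightarrow> F x > e"
proof (rule ccontr)
  assume A: "\<not> ?thesis"
  have A2: "\<forall>e>0. \<exists>x. \<bar>P x\<bar> < e \<and> F x \<le> e"
  proof (intro allI impI)
    fix e :: real assume "e > 0"
    with A have "\<not> (\<forall>x. \<bar>P x\<bar> < e \<longrightarrow> F x > e)" by blast
    then show "\<exists>x. \<bar>P x\<bar> < e \<and> F x \<le> e" by (auto simp: not_less)
  qed
  have "\<forall>n. \<exists>x. \<bar>P x\<bar> < inverse (real (Suc n)) \<and> F x \<le> inverse (real (Suc n))"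
  proof
    fix n :: nat
    have "inverse (real (Suc n)) > 0" by simp
    then show "\<exists>x. \<bar>P x\<bar> < inverse (real (Suc n)) \<and> F x \<le> inverse (real (Suc n))"
      using A2 by blast
  qed
  then obtain X where X: "\<And>n. \<bar>P (X n)\<bar> < inverse (real (Suc n)) \<and> F (X n) \<le> inverse (real (Suc n))"
    by metis
  define y where "y n = vfrac (X n)" for n
  have yc: "y n \<in> cbox 0 One" for n using subsetD[OF unit_cube_sub_cbox vfrac_in_cube] by (simp add: y_def)
  have Py: "P (y n) = P (X n)" "F (y n) = F (X n)" for n
    using periodic_vfrac[OF pP] periodic_vfrac[OF pF] y_def by auto
  have "seq_compact (cbox (0::'a) One)"
    using compact_cbox compact_imp_seq_compact by blast
  then obtain l r where l: "l \<in> cbox 0 One" "strict_mono r" "(y \<circ> r) \<longlonglongrightarrow> l"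
    using seq_compactE yc by metis
  have inv0: "(\<lambda>n. inverse (real (Suc (r n)))) \<longlonglongrightarrow> 0"
    using LIMSEQ_subseq_LIMSEQ[OF LIMSEQ_inverse_real_of_nat l(2)] by (simp add: o_def)
  have "isCont P l" "isCont F l" using cP cF continuous_on_eq_continuous_at open_UNIV by blast+
  then have t1: "(\<lambda>n. P ((y \<circ> r) n)) \<longlonglongrightarrow> P l" and t2: "(\<lambda>n. F ((y \<circ> r) n)) \<longlonglongrightarrow> F l"
    using isCont_tendsto_compose l(3) by blast+
  have "(\<lambda>n. \<bar>P ((y \<circ> r) n)\<bar>) \<longlonglongrightarrow> \<bar>P l\<bar>" using t1 by (rule tendsto_rabs)
  then have "\<bar>P l\<bar> \<le> 0"
  proof (rule LIMSEQ_le[OF _ inv0])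
    have "\<bar>P ((y \<circ> r) n)\<bar> \<le> inverse (real (Suc (r n)))" for n
      using X[of "r n"] Py(1)[of "r n"] by simp
    then show "\<exists>N. \<forall>n\<ge>N. \<bar>P ((y \<circ> r) n)\<bar> \<le> inverse (real (Suc (r n)))" by blast
  qed
  then have P0: "P (vfrac l) = 0" using periodic_vfrac[OF pP] by simp
  have "F l \<le> 0"
  proof (rule LIMSEQ_le[OF t2 inv0])
    have "F ((y \<circ> r) n) \<le> inverse (real (Suc (r n)))" for n
      using X[of "r n"] Py(2)[of "r n"] by simp
    then show "\<exists>N. \<forall>n\<ge>N. F ((y \<circ> r) n) \<le> inverse (real (Suc (r n)))" by blast
  qed
  then have "F (vfrac l) \<le> 0" using periodic_vfrac[OF pF] by simp
  moreover have "F (vfrac l) > 0" using H P0 vfrac_in_cube by blast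
  ultimately show False by simp
qed

definition cint :: "('a::euclidean_space \<Rightarrow> real) \<Rightarrow> real" where
  "cint f = integral\<^sup>L lborel (\<lambda>x. indicator unit_cube x * f x)"

definition hbox :: "('a::euclidean_space \<Rightarrow> real) \<Rightarrow> ('a \<Rightarrow> real) \<Rightarrow> 'a set" where
  "hbox l u = {y. \<forall>c\<in>Basis. l c \<le> y \<bullet> c \<and> y \<bullet> c < u c}"

lemma hbox_borel: "hbox l u \<in> sets borel"
proof -
  have "hbox l u = (\<Inter>c\<in>Basis. {y. l c \<le> y \<bullet> c} \<inter> {y. y \<bullet> c < u c})"
    unfolding hbox_def by auto
  also have "\<dots> \<in> sets borel"
    by (intro sets.finite_INT sets.Int borel_closed borel_open closed_halfspace_component_ge open_halfspace_component_lt) auto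
  finally show ?thesis .
qed

lemma hbox_split: "b \<in> Basis \<Longrightarrow> y \<in> hbox l u \<longleftrightarrow> (l b \<le> y \<bullet> b \<and> y \<bullet> b < u b) \<and> (\<forall>c\<in>Basis. c \<noteq> b \<longrightarrow> l c \<le> y \<bullet> c \<and> y \<bullet> c < u c)"
  unfolding hbox_def by auto

lemma hbox_sub:
  assumes "\<And>c. c \<in> Basis \<Longrightarrow> 0 \<le> l c \<and> u c \<le> 2"
  shows "hbox l u \<subseteq> cbox 0 (2 *\<^sub>R One)"
proof
  fix y assume y: "y \<in> hbox l u"
  show "y \<in> cbox 0 (2 *\<^sub>R One)" unfolding mem_box
  proof
    fix c :: 'a assume c: "c \<in> Basis"
    then have "l c \<le> y \<bullet> c" "y \<bullet> c < u c" using y unfolding hbox_def by auto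
    then show "0 \<bullet> c \<le> y \<bullet> c \<and> y \<bullet> c \<le> (2 *\<^sub>R One) \<bullet> c" using assms[OF c] c by simp
  qed
qed

lemma cube_hbox: "unit_cube = hbox (\<lambda>_. 0) (\<lambda>_. 1)"
  unfolding unit_cube_def hbox_def by auto

lemma cube_borel: "unit_cube \<in> sets borel"
  using cube_hbox hbox_borel by metis

lemma int_on_set:
  fixes F :: "'a::euclidean_space \<Rightarrow> real"
  assumes "continuous_on UNIV F" "S \<in> sets borel" "S \<subseteq> cbox a b"
  shows "integrable lborel (\<lambda>x. indicator S x * F x)"
proof -
  have "integrable lborel (\<lambda>x. indicator (cbox a b) x *\<^sub>R F x)"
    by (rule borel_integrable_compact) (auto intro: continuous_on_subset[OF assms(1)])
  then have int: "integrable lborel (\<lambda>x. indicator S x *\<^sub>R (indicator (cbox a b) x *\<^sub>R F x))"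
    by (rule integrable_mult_indicator[rotated]) (use assms in simp)
  have eq: "(\<lambda>x. indicator S x *\<^sub>R (indicator (cbox a b) x *\<^sub>R F x)) = (\<lambda>x. indicator S x * F x)"
    by (rule ext) (use assms(3) in \<open>auto split: split_indicator\<close>)
  show ?thesis using int unfolding eq .
qed

lemma int_cube:
  fixes F :: "'a::euclidean_space \<Rightarrow> real"
  assumes "continuous_on UNIV F"
  shows "integrable lborel (\<lambda>x. indicator unit_cube x * F x)"
  using int_on_set[OF assms cube_borel unit_cube_sub_cbox] .

lemma shift_int:
  fixes g :: "'a::euclidean_space \<Rightarrow> real"
  assumes "g \<in> borel_measurable borel"
  shows "integral\<^sup>L lborel (\<lambda>x. g (x + c)) = integral\<^sup>L lborel g"
proof -
  have m: "(+) c \<in> measurable lborel borel"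
    by (simp add: borel_measurable_continuous_onI continuous_on_add continuous_on_const continuous_on_id)
  have "integral\<^sup>L lborel g = integral\<^sup>L (distr lborel borel ((+) c)) g" by (simp add: lborel_distr_plus)
  also have "\<dots> = integral\<^sup>L lborel (\<lambda>x. g (c + x))" by (rule integral_distr[OF m assms])
  finally show ?thesis by (simp add: add.commute)
qed

lemma transl:
  fixes F :: "'a::euclidean_space \<Rightarrow> real"
  assumes cF: "continuous_on UNIV F" and pF: "\<And>x. F (x + b) = F x" and b: "b \<in> Basis"
    and t: "0 \<le> t" "t \<le> 1"
  shows "cint (\<lambda>x. F (x + t *\<^sub>R b)) = cint F"
proof -
  have Fm: "F \<in> borel_measurable borel" using cF by (rule borel_measurable_continuous_onI)
  define C1 where "C1 = hbox (\<lambda>c. if c = b then t else 0) (\<lambda>c. 1::real)"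
  define A0 where "A0 = hbox (\<lambda>c. 0::real) (\<lambda>c. if c = b then t else 1)"
  define A1 where "A1 = hbox (\<lambda>c. if c = b then 1 else 0::real) (\<lambda>c. if c = b then 1 + t else 1)"
  have ib: "\<And>c. c \<in> Basis \<Longrightarrow> c \<noteq> b \<Longrightarrow> b \<bullet> c = 0" using b by (simp add: inner_Basis)
  have bb: "b \<bullet> b = 1" using b by simp
  have R1: "(y - t *\<^sub>R b) \<bullet> c = y \<bullet> c" if "c \<in> Basis" "c \<noteq> b" for y c
    using ib[OF that] by (simp add: inner_diff_left)
  have R2: "(y + b) \<bullet> c = y \<bullet> c" if "c \<in> Basis" "c \<noteq> b" for y c
    using ib[OF that] by (simp add: inner_add_left)
  have R3: "(y - t *\<^sub>R b) \<bullet> b = y \<bullet> b - t" "(y + b) \<bullet> b = y \<bullet> b + 1" for y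
    using bb by (simp_all add: inner_diff_left inner_add_left)
  have sC1: "y \<in> C1 \<longleftrightarrow> (t \<le> y \<bullet> b \<and> y \<bullet> b < 1) \<and> (\<forall>c\<in>Basis. c \<noteq> b \<longrightarrow> 0 \<le> y \<bullet> c \<and> y \<bullet> c < 1)" for y
    unfolding C1_def hbox_split[OF b] by auto
  have sA0: "y \<in> A0 \<longleftrightarrow> (0 \<le> y \<bullet> b \<and> y \<bullet> b < t) \<and> (\<forall>c\<in>Basis. c \<noteq> b \<longrightarrow> 0 \<le> y \<bullet> c \<and> y \<bullet> c < 1)" for y
    unfolding A0_def hbox_split[OF b] by auto
  have sA1: "y \<in> A1 \<longleftrightarrow> (1 \<le> y \<bullet> b \<and> y \<bullet> b < 1 + t) \<and> (\<forall>c\<in>Basis. c \<noteq> b \<longrightarrow> 0 \<le> y \<bullet> c \<and> y \<bullet> c < 1)" for y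
    unfolding A1_def hbox_split[OF b] by auto
  have sQ: "y \<in> unit_cube \<longleftrightarrow> (0 \<le> y \<bullet> b \<and> y \<bullet> b < 1) \<and> (\<forall>c\<in>Basis. c \<noteq> b \<longrightarrow> 0 \<le> y \<bullet> c \<and> y \<bullet> c < 1)" for y
    unfolding cube_hbox hbox_split[OF b] by auto
  have sQ1: "y - t *\<^sub>R b \<in> unit_cube \<longleftrightarrow> (t \<le> y \<bullet> b \<and> y \<bullet> b < 1 + t) \<and> (\<forall>c\<in>Basis. c \<noteq> b \<longrightarrow> 0 \<le> y \<bullet> c \<and> y \<bullet> c < 1)" for y
    unfolding sQ R3 using R1 by auto
  have sA1b: "y + b \<in> A1 \<longleftrightarrow> y \<in> A0" for y
    unfolding sA1 sA0 R3 using R2 by auto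
  have P1: "indicator unit_cube (y - t *\<^sub>R b) = (indicator C1 y + indicator A1 y :: real)" for y
    unfolding indicator_def using sQ1[of y] sC1[of y] sA1[of y] t by auto
  have P2: "indicator unit_cube y = (indicator C1 y + indicator A0 y :: real)" for y
    unfolding indicator_def using sQ[of y] sC1[of y] sA0[of y] t by auto
  have bC1: "C1 \<in> sets borel" "A0 \<in> sets borel" "A1 \<in> sets borel"
    unfolding C1_def A0_def A1_def by (rule hbox_borel)+
  have sub: "C1 \<subseteq> cbox 0 (2 *\<^sub>R One)" "A0 \<subseteq> cbox 0 (2 *\<^sub>R One)" "A1 \<subseteq> cbox 0 (2 *\<^sub>R One)"
    unfolding C1_def A0_def A1_def using t by (auto intro!: hbox_sub)
  have iC1: "integrable lborel (\<lambda>x. indicator C1 x * F x)" and iA0: "integrable lborel (\<lambda>x. indicator A0 x * F x)"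
    and iA1: "integrable lborel (\<lambda>x. indicator A1 x * F x)"
    using int_on_set[OF cF bC1(1) sub(1)] int_on_set[OF cF bC1(2) sub(2)] int_on_set[OF cF bC1(3) sub(3)] by auto
  have "cint (\<lambda>x. F (x + t *\<^sub>R b)) = integral\<^sup>L lborel (\<lambda>x. (\<lambda>y. indicator unit_cube (y - t *\<^sub>R b) * F y) (x + t *\<^sub>R b))"
    unfolding cint_def by simp
  also have "\<dots> = integral\<^sup>L lborel (\<lambda>y. indicator unit_cube (y - t *\<^sub>R b) * F y)"
  proof (rule shift_int)
    show "(\<lambda>y. indicator unit_cube (y - t *\<^sub>R b) * F y :: real) \<in> borel_measurable borel"
      unfolding P1 using bC1 Fm by measurable
  qed
  also have "\<dots> = integral\<^sup>L lborel (\<lambda>y. indicator C1 y * F y + indicator A1 y * F y)"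
    unfolding P1 by (simp add: algebra_simps)
  also have "\<dots> = integral\<^sup>L lborel (\<lambda>y. indicator C1 y * F y) + integral\<^sup>L lborel (\<lambda>y. indicator A1 y * F y)"
    using iC1 iA1 by simp
  also have "integral\<^sup>L lborel (\<lambda>y. indicator A1 y * F y) = integral\<^sup>L lborel (\<lambda>y. indicator A1 (y + b) * F (y + b))"
  proof (rule shift_int[symmetric])
    show "(\<lambda>y. indicator A1 y * F y :: real) \<in> borel_measurable borel" using bC1 Fm by measurable
  qed
  also have "\<dots> = integral\<^sup>L lborel (\<lambda>y. indicator A0 y * F y)"
    using sA1b pF by (simp add: indicator_def)
  also have "integral\<^sup>L lborel (\<lambda>y. indicator C1 y * F y) + integral\<^sup>L lborel (\<lambda>y. indicator A0 y * F y)
      = integral\<^sup>L lborel (\<lambda>y. indicator C1 y * F y + indicator A0 y * F y)"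
    using iC1 iA0 by simp
  also have "\<dots> = cint F" unfolding cint_def P2 by (simp add: algebra_simps)
  finally show ?thesis .
qed

lemma line_deriv:
  assumes "(F has_derivative D) (at (x + s *\<^sub>R v))"
  shows "((\<lambda>t. F (x + t *\<^sub>R v)) has_real_derivative D v) (at s)"
proof -
  have "((\<lambda>t. x + t *\<^sub>R v) has_derivative (\<lambda>t. t *\<^sub>R v)) (at s)"
    by (auto intro!: derivative_eq_intros)
  from has_derivative_compose[OF this assms]
  have "((\<lambda>t. F (x + t *\<^sub>R v)) has_derivative (\<lambda>t. D (t *\<^sub>R v))) (at s)" by simp
  moreover have "D (t *\<^sub>R v) = t * D v" for t
    using linear_cmul[OF has_derivative_linear[OF assms]] by simp
  ultimately show ?thesis by (simp add: has_field_derivative_def mult.commute[of _ "D v"])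
qed

lemma int_deriv_zero:
  fixes F :: "'a::euclidean_space \<Rightarrow> real"
  assumes pF: "\<And>x. F (x + b) = F x" and b: "b \<in> Basis"
    and dF: "\<And>x. (F has_derivative DF x) (at x)"
    and cD: "continuous_on UNIV (\<lambda>x. DF x b)"
  shows "cint (\<lambda>x. DF x b) = 0"
proof -
  have cF: "continuous_on UNIV F"
    using dF has_derivative_continuous continuous_at_imp_continuous_on by blast
  define tn where "tn n = inverse (real (Suc n))" for n
  have tn: "0 < tn n" "tn n \<le> 1" for n unfolding tn_def by (auto simp: field_simps)
  define s where "s n x = indicator unit_cube x * ((F (x + tn n *\<^sub>R b) - F x) / tn n)" for n x
  have int0: "integral\<^sup>L lborel (s n) = 0" for n
  proof -
    have cFs: "continuous_on UNIV (\<lambda>x. F (x + tn n *\<^sub>R b))"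
      by (rule continuous_on_compose2[OF cF]) (auto intro!: continuous_intros)
    have i1: "integrable lborel (\<lambda>x. indicator unit_cube x * F (x + tn n *\<^sub>R b))"
      using int_cube[OF cFs] .
    have i2: "integrable lborel (\<lambda>x. indicator unit_cube x * F x)" using int_cube[OF cF] .
    have "s n = (\<lambda>x. (indicator unit_cube x * F (x + tn n *\<^sub>R b) - indicator unit_cube x * F x) / tn n)"
      unfolding s_def by (rule ext) (simp add: algebra_simps diff_divide_distrib)
    then have "integral\<^sup>L lborel (s n) = (cint (\<lambda>x. F (x + tn n *\<^sub>R b)) - cint F) / tn n"
      unfolding cint_def using i1 i2 by simp
    also have "\<dots> = 0" using transl[OF cF pF b, of "tn n"] tn[of n] by simp
    finally show ?thesis .
  qed
  have "compact ((\<lambda>x. DF x b) ` cbox 0 (2 *\<^sub>R One))"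
    by (rule compact_continuous_image) (use cD continuous_on_subset in auto)
  then obtain M where M: "\<And>y. y \<in> cbox 0 (2 *\<^sub>R One) \<Longrightarrow> \<bar>DF y b\<bar> \<le> M"
    using compact_imp_bounded bounded_iff by (metis image_eqI real_norm_def)
  have bound: "\<bar>s n x\<bar> \<le> indicator unit_cube x * M" for n x
  proof (cases "x \<in> unit_cube")
    case False then show ?thesis by (simp add: s_def)
  next
    case True
    have "\<exists>z. 0 < z \<and> z < tn n \<and> F (x + tn n *\<^sub>R b) - F (x + 0 *\<^sub>R b) = (tn n - 0) * DF (x + z *\<^sub>R b) b"
      by (rule MVT2[OF tn(1)]) (rule line_deriv[OF dF])
    then obtain z where z: "0 < z" "z < tn n" "F (x + tn n *\<^sub>R b) - F x = tn n * DF (x + z *\<^sub>R b) b" by auto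
    have "x + z *\<^sub>R b \<in> cbox 0 (2 *\<^sub>R One)" unfolding mem_box
    proof
      fix c :: 'a assume c: "c \<in> Basis"
      have "0 \<le> x \<bullet> c" "x \<bullet> c < 1" using True c unfolding unit_cube_def by auto
      moreover have "0 \<le> b \<bullet> c" "b \<bullet> c \<le> 1" using b c by (auto simp: inner_Basis)
      moreover have "z * (b \<bullet> c) \<le> 1" using z tn[of n] \<open>0 \<le> b \<bullet> c\<close> \<open>b \<bullet> c \<le> 1\<close>
        by (metis dual_order.trans less_eq_real_def mult_le_one)
      moreover have "0 \<le> z * (b \<bullet> c)" using z \<open>0 \<le> b \<bullet> c\<close> by simp
      ultimately show "0 \<bullet> c \<le> (x + z *\<^sub>R b) \<bullet> c \<and> (x + z *\<^sub>R b) \<bullet> c \<le> (2 *\<^sub>R One) \<bullet> c"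
        using c by (simp add: inner_add_left)
    qed
    then have "\<bar>DF (x + z *\<^sub>R b) b\<bar> \<le> M" by (rule M)
    moreover have "s n x = DF (x + z *\<^sub>R b) b" using z tn[of n] True by (simp add: s_def)
    ultimately show ?thesis using True by simp
  qed
  have lim: "(\<lambda>n. s n x) \<longlonglongrightarrow> indicator unit_cube x * DF x b" for x
  proof -
    have "((\<lambda>t. F (x + t *\<^sub>R b)) has_real_derivative DF x b) (at 0)"
      using line_deriv[of F "DF x" x 0 b] dF by simp
    then have l1: "((\<lambda>t. (F (x + t *\<^sub>R b) - F x) / t) \<longlongrightarrow> DF x b) (at 0)"
      unfolding has_field_derivative_iff by simp
    have "filterlim tn (at 0) sequentially"
      unfolding filterlim_at tn_def using LIMSEQ_inverse_real_of_nat by auto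
    from filterlim_compose[OF l1 this]
    have "(\<lambda>n. (F (x + tn n *\<^sub>R b) - F x) / tn n) \<longlonglongrightarrow> DF x b" .
    then show ?thesis unfolding s_def by (rule tendsto_mult_left)
  qed
  have "(\<lambda>n. integral\<^sup>L lborel (s n)) \<longlonglongrightarrow> integral\<^sup>L lborel (\<lambda>x. indicator unit_cube x * DF x b)"
  proof (rule integral_dominated_convergence[where w = "\<lambda>x. indicator unit_cube x * M"])
    have m1: "(\<lambda>x. DF x b) \<in> borel_measurable borel" using cD by (rule borel_measurable_continuous_onI)
    have m2: "F \<in> borel_measurable borel" using cF by (rule borel_measurable_continuous_onI)
    show "(\<lambda>x. indicator unit_cube x * DF x b) \<in> borel_measurable lborel"
      using m1 cube_borel by measurable
    show "s n \<in> borel_measurable lborel" for n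
      unfolding s_def using m2 cube_borel by measurable
    show "integrable lborel (\<lambda>x. indicator unit_cube x * M)"
      using int_cube[of "\<lambda>x. M"] by simp
    show "AE x in lborel. (\<lambda>n. s n x) \<longlonglongrightarrow> indicator unit_cube x * DF x b"
      using lim by simp
    show "AE x in lborel. norm (s n x) \<le> indicator unit_cube x * M" for n
      using bound by simp
  qed
  then have "(\<lambda>n. 0) \<longlonglongrightarrow> cint (\<lambda>x. DF x b)" unfolding cint_def int0 .
  then show ?thesis using LIMSEQ_const_iff by (metis)
qed

definition c1 :: "('a::euclidean_space \<Rightarrow> real) \<Rightarrow> bool" where
  "c1 u \<longleftrightarrow> (\<forall>x. u differentiable (at x)) \<and> (\<forall>b\<in>Basis. continuous_on UNIV (dd [b] u))"

lemma dd1: "dd [b] f x = frechet_derivative f (at x) b" by simp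

lemma diff_cont: "(\<forall>x. f differentiable (at x)) \<Longrightarrow> continuous_on UNIV f"
  by (simp add: continuous_at_imp_continuous_on differentiable_imp_continuous_within)

lemma C2_facts:
  assumes "C2 v"
  shows "\<forall>x. v differentiable (at x)" "continuous_on UNIV v"
    "\<And>b. b \<in> Basis \<Longrightarrow> continuous_on UNIV (dd [b] v)"
    "\<And>b. b \<in> Basis \<Longrightarrow> \<forall>x. dd [b] v differentiable (at x)"
    "\<And>b c. b \<in> Basis \<Longrightarrow> c \<in> Basis \<Longrightarrow> continuous_on UNIV (dd [b, c] v)"
  using assms diff_cont unfolding C2_def by blast+

lemma C2_c1: "C2 v \<Longrightarrow> c1 v"
  using C2_facts unfolding c1_def by blast

lemma c1_cont: "c1 u \<Longrightarrow> continuous_on UNIV u"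
  unfolding c1_def using diff_cont by blast

lemma dd_mult:
  fixes u w :: "'a::euclidean_space \<Rightarrow> real"
  assumes "u differentiable (at x)" "w differentiable (at x)"
  shows "dd [b] (\<lambda>y. u y * w y) x = dd [b] u x * w x + u x * dd [b] w x"
proof -
  have "((\<lambda>y. u y * w y) has_derivative (\<lambda>h. u x * frechet_derivative w (at x) h + frechet_derivative u (at x) h * w x)) (at x)"
    using has_derivative_mult[OF frechet_derivative_works[THEN iffD1, OF assms(1)] frechet_derivative_works[THEN iffD1, OF assms(2)]] .
  from fun_cong[OF frechet_derivative_at[OF this], of b] show ?thesis by (simp add: algebra_simps)
qed

lemma mult_diff: fixes u w :: "'a::euclidean_space \<Rightarrow> real" shows "u differentiable (at x) \<Longrightarrow> w differentiable (at x) \<Longrightarrow> (\<lambda>y. u y * w y) differentiable (at x)"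
  by simp

lemma dd_shift:
  assumes pf: "\<And>y. f (y + c) = f y" and d: "f differentiable (at (x + c))"
  shows "dd [b] f (x + c) = dd [b] f x"
proof -
  have "((\<lambda>y. y + c) has_derivative (\<lambda>h. h)) (at x)" by (auto intro!: derivative_eq_intros)
  from has_derivative_compose[OF this frechet_derivative_works[THEN iffD1, OF d]]
  have "((\<lambda>y. f (y + c)) has_derivative frechet_derivative f (at (x + c))) (at x)" by simp
  then have "(f has_derivative frechet_derivative f (at (x + c))) (at x)" using pf by simp
  from fun_cong[OF frechet_derivative_at[OF this], of b] show ?thesis by simp
qed

lemma c1_mult: "c1 u \<Longrightarrow> c1 w \<Longrightarrow> c1 (\<lambda>y. u y * w y)"
proof -
  assume u: "c1 u" and w: "c1 w"
  have du: "\<forall>x. u differentiable (at x)" and dw: "\<forall>x. w differentiable (at x)" using u w c1_def by auto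
  have "continuous_on UNIV (dd [b] (\<lambda>y. u y * w y))" if b: "b \<in> Basis" for b
  proof -
    have "dd [b] (\<lambda>y. u y * w y) = (\<lambda>x. dd [b] u x * w x + u x * dd [b] w x)"
      using dd_mult du dw by blast
    moreover have "continuous_on UNIV (\<lambda>x. dd [b] u x * w x + u x * dd [b] w x)"
      using u w b c1_cont unfolding c1_def by (intro continuous_intros) auto
    ultimately show ?thesis by simp
  qed
  then show ?thesis unfolding c1_def using du dw mult_diff by blast
qed

lemma cint_add:
  assumes "continuous_on UNIV f" "continuous_on UNIV g"
  shows "cint (\<lambda>x. f x + g x) = cint f + cint g"
  unfolding cint_def using int_cube[OF assms(1)] int_cube[OF assms(2)] by (simp add: distrib_left)

lemma cint_sum:
  assumes "finite I" "\<And>i. i \<in> I \<Longrightarrow> continuous_on UNIV (f i)"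
  shows "cint (\<lambda>x. \<Sum>i\<in>I. f i x) = (\<Sum>i\<in>I. cint (f i))"
proof -
  have "\<And>i. i \<in> I \<Longrightarrow> integrable lborel (\<lambda>x. indicator unit_cube x * f i x)"
    using int_cube assms by blast
  from Bochner_Integration.integral_sum[where I=I and M=lborel and f="\<lambda>i x. indicator unit_cube x * f i x", OF this]
  show ?thesis unfolding cint_def sum_distrib_left .
qed

lemma ibp:
  assumes u: "c1 u" "periodic u" and v: "C2 v" "periodic v"
  shows "cint (\<lambda>x. u x * laplacian v x) = - cint (\<lambda>x. \<Sum>b\<in>Basis. dd [b] u x * dd [b] v x)"
proof -
  note vf = C2_facts[OF v(1)]
  have du: "\<And>x. u differentiable (at x)" and cdu: "\<And>b. b \<in> Basis \<Longrightarrow> continuous_on UNIV (dd [b] u)"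
    using u(1) unfolding c1_def by auto
  have cu: "continuous_on UNIV u" using c1_cont u(1) by blast
  have key: "cint (\<lambda>x. u x * dd [b, b] v x + dd [b] u x * dd [b] v x) = 0" if b: "b \<in> Basis" for b
  proof -
    define DF where "DF x = (\<lambda>h. u x * frechet_derivative (dd [b] v) (at x) h + frechet_derivative u (at x) h * dd [b] v x)" for x
    have dF: "((\<lambda>x. u x * dd [b] v x) has_derivative DF x) (at x)" for x
      unfolding DF_def
      using has_derivative_mult[OF frechet_derivative_works[THEN iffD1, OF du] frechet_derivative_works[THEN iffD1, OF vf(4)[OF b, rule_format]]] .
    have DFb: "DF x b = u x * dd [b, b] v x + dd [b] u x * dd [b] v x" for x
      unfolding DF_def by simp
    have pu: "u (x + b) = u x" for x using u(2) b unfolding periodic_def by blast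
    have pv: "v (x + b) = v x" for x using v(2) b unfolding periodic_def by blast
    have pdv: "dd [b] v (x + b) = dd [b] v x" for x
      using dd_shift[of v b x b] pv vf(1) by blast
    have "cint (\<lambda>x. DF x b) = 0"
    proof (rule int_deriv_zero[OF _ b dF])
      show "u (x + b) * dd [b] v (x + b) = u x * dd [b] v x" for x using pu pdv by simp
      show "continuous_on UNIV (\<lambda>x. DF x b)" unfolding DFb
        using cu vf(5)[OF b b] cdu[OF b] vf(3)[OF b] by (intro continuous_intros)
    qed
    then show ?thesis unfolding DFb .
  qed
  have cont1: "continuous_on UNIV (\<lambda>x. u x * dd [b, b] v x)" if "b \<in> Basis" for b
    using cu vf(5)[OF that that] by (intro continuous_intros)
  have cont2: "continuous_on UNIV (\<lambda>x. dd [b] u x * dd [b] v x)" if "b \<in> Basis" for b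
    using cdu[OF that] vf(3)[OF that] by (intro continuous_intros)
  have "0 = (\<Sum>b\<in>Basis. cint (\<lambda>x. u x * dd [b, b] v x + dd [b] u x * dd [b] v x))"
    using key by simp
  also have "\<dots> = (\<Sum>b\<in>Basis. cint (\<lambda>x. u x * dd [b, b] v x) + cint (\<lambda>x. dd [b] u x * dd [b] v x))"
    using cint_add cont1 cont2 by (intro sum.cong) auto
  also have "\<dots> = cint (\<lambda>x. \<Sum>b\<in>Basis. u x * dd [b, b] v x) + cint (\<lambda>x. \<Sum>b\<in>Basis. dd [b] u x * dd [b] v x)"
  proof -
    have s1: "cint (\<lambda>x. \<Sum>b\<in>Basis. u x * dd [b, b] v x) = (\<Sum>b\<in>Basis. cint (\<lambda>x. u x * dd [b, b] v x))"
      by (rule cint_sum[where f="\<lambda>b x. u x * dd [b, b] v x", OF finite_Basis cont1])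
    have s2: "cint (\<lambda>x. \<Sum>b\<in>Basis. dd [b] u x * dd [b] v x) = (\<Sum>b\<in>Basis. cint (\<lambda>x. dd [b] u x * dd [b] v x))"
      by (rule cint_sum[where f="\<lambda>b x. dd [b] u x * dd [b] v x", OF finite_Basis cont2])
    show ?thesis unfolding s1 s2 by (simp add: sum.distrib)
  qed
  also have "cint (\<lambda>x. \<Sum>b\<in>Basis. u x * dd [b, b] v x) = cint (\<lambda>x. u x * laplacian v x)"
    unfolding laplacian_def by (simp add: sum_distrib_left)
  finally show ?thesis by simp
qed

definition th :: "real \<Rightarrow> real" where
  "th s = (if s \<le> 0 then 1 else if 1 \<le> s then 0 else 1 - 3 * s^2 + 2 * s^3)"

definition th' :: "real \<Rightarrow> real" where
  "th' s = min 0 (6 * s^2 - 6 * s)"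

lemma deriv_quad:
  fixes f :: "real \<Rightarrow> real"
  assumes "\<And>y. \<bar>f y - f x\<bar> \<le> C * (y - x)^2"
  shows "(f has_real_derivative 0) (at x)"
proof -
  have "((\<lambda>y. (f y - f x) / (y - x)) \<longlongrightarrow> 0) (at x)"
  proof (rule Lim_null_comparison)
    show "eventually (\<lambda>y. norm ((f y - f x) / (y - x)) \<le> C * \<bar>y - x\<bar>) (at x)"
    proof (rule always_eventually, rule allI)
      fix y
      show "norm ((f y - f x) / (y - x)) \<le> C * \<bar>y - x\<bar>"
      proof (cases "y = x")
        case True
        have "\<bar>f (x+1) - f x\<bar> \<le> C" using assms[of "x+1"] by simp
        then have "0 \<le> C" by (meson abs_ge_zero order_trans)
        then show ?thesis using True by simp
      next
        case False
        then have p: "\<bar>y - x\<bar> > 0" by simp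
        have "norm ((f y - f x) / (y - x)) = \<bar>f y - f x\<bar> / \<bar>y - x\<bar>" by (simp add: abs_divide)
        also have "\<dots> \<le> C * (y - x)^2 / \<bar>y - x\<bar>" using assms[of y] p by (simp add: divide_right_mono)
        also have "\<dots> = C * \<bar>y - x\<bar>" using p by (simp add: power2_eq_square field_simps abs_mult_self_eq)
        finally show ?thesis .
      qed
    qed
    show "((\<lambda>y. C * \<bar>y - x\<bar>) \<longlongrightarrow> 0) (at x)"
    proof -
      have "((\<lambda>y. C * \<bar>y - x\<bar>) \<longlongrightarrow> C * \<bar>x - x\<bar>) (at x)" by (intro tendsto_intros)
      then show ?thesis by simp
    qed
  qed
  then show ?thesis using has_field_derivative_iff by blast
qed

lemma th_deriv: "(th has_real_derivative th' s) (at s)"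
proof -
  consider "s < 0" | "s = 0" | "0 < s \<and> s < 1" | "s = 1" | "1 < s" by linarith
  then show ?thesis
  proof cases
    case 1
    have "th' s = 0" using 1 unfolding th'_def by (simp add: power2_eq_square)
    then have "((\<lambda>_. 1::real) has_real_derivative th' s) (at s)" by simp
    then show ?thesis
      by (rule has_field_derivative_transform_within_open[where S="{..<0}"]) (use 1 in \<open>auto simp: th_def\<close>)
  next
    case 5
    have "s * 1 \<le> s * s" using 5 by (intro mult_left_mono) auto
    then have "th' s = 0" using 5 unfolding th'_def by (simp add: power2_eq_square)
    then have "((\<lambda>_. 0::real) has_real_derivative th' s) (at s)" by simp
    then show ?thesis
      by (rule has_field_derivative_transform_within_open[where S="{1<..}"]) (use 5 in \<open>auto simp: th_def\<close>)
  next
    case 3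
    have "((\<lambda>s. 1 - 3 * s^2 + 2 * s^3) has_real_derivative (- 6 * s + 6 * s^2)) (at s)"
      by (auto intro!: derivative_eq_intros simp: power2_eq_square)
    moreover have "s * s \<le> s * 1" using 3 by (intro mult_left_mono) auto
    then have "th' s = - 6 * s + 6 * s^2" using 3 unfolding th'_def
      by (simp add: power2_eq_square)
    ultimately have "((\<lambda>s. 1 - 3 * s^2 + 2 * s^3) has_real_derivative th' s) (at s)" by simp
    then show ?thesis
      by (rule has_field_derivative_transform_within_open[where S="{0<..<1}"]) (use 3 in \<open>auto simp: th_def\<close>)
  next
    case 2
    have "(th has_real_derivative 0) (at 0)"
    proof (rule deriv_quad[where C=3])
      fix y :: real
      show "\<bar>th y - th 0\<bar> \<le> 3 * (y - 0)^2"
      proof (cases "y \<le> 0")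
        case True then show ?thesis by (simp add: th_def)
      next
        case False
        show ?thesis
        proof (cases "1 \<le> y")
          case True
          then have y1: "1 \<le> y^2" by (simp add: one_le_power)
          have "\<bar>th y - th 0\<bar> = 1" using True by (simp add: th_def)
          with y1 show ?thesis by simp
        next
          case False
          have "\<bar>- 3 * y^2 + 2 * y^3\<bar> \<le> 3 * y^2" using \<open>\<not> y \<le> 0\<close> False
            by (simp add: power2_eq_square power3_eq_cube)
          then show ?thesis using \<open>\<not> y \<le> 0\<close> False by (simp add: th_def)
        qed
      qed
    qed
    moreover have "th' 0 = 0" by (simp add: th'_def)
    ultimately show ?thesis using 2 by simp
  next
    case 4
    have "(th has_real_derivative 0) (at 1)"
    proof (rule deriv_quad[where C=3])
      fix y :: real
      show "\<bar>th y - th 1\<bar> \<le> 3 * (y - 1)^2"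
      proof (cases "1 \<le> y")
        case True then show ?thesis by (simp add: th_def)
      next
        case False
        show ?thesis
        proof (cases "y \<le> 0")
          case True
          then have "1 \<le> 1 - y" by simp
          then have y1: "1 \<le> (1 - y)^2" by (simp add: one_le_power)
          have "\<bar>th y - th 1\<bar> = 1" using True by (simp add: th_def)
          with y1 show ?thesis by (simp add: power2_commute)
        next
          case False
          have e: "1 - 3 * y^2 + 2 * y^3 = (1 - y)^2 * (1 + 2 * y)" by (simp add: power2_eq_square power3_eq_cube algebra_simps)
          have "(1 - y)^2 * (1 + 2 * y) \<le> (1 - y)^2 * 3" using \<open>\<not> 1 \<le> y\<close> by (intro mult_left_mono) auto
          moreover have "0 \<le> (1 - y)^2 * (1 + 2 * y)" using False by simp
          ultimately have "\<bar>1 - 3 * y^2 + 2 * y^3\<bar> \<le> 3 * (y - 1)^2" unfolding e by (simp add: power2_commute)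
          then show ?thesis using \<open>\<not> 1 \<le> y\<close> False by (simp add: th_def)
        qed
      qed
    qed
    moreover have "th' 1 = 0" by (simp add: th'_def)
    ultimately show ?thesis using 4 by simp
  qed
qed

lemma th_cont: "continuous_on UNIV th'"
  unfolding th'_def by (intro continuous_intros)

lemma th'_le: "th' s \<le> 0" unfolding th'_def by simp

lemma th'_supp: "th' s \<noteq> 0 \<Longrightarrow> 0 < s \<and> s < 1"
proof -
  assume "th' s \<noteq> 0"
  then have "6 * s^2 - 6 * s < 0" unfolding th'_def by (simp add: min_def split: if_splits)
  then have "s * (s - 1) < 0" by (simp add: power2_eq_square algebra_simps)
  then show ?thesis by (auto simp: mult_less_0_iff)
qed

lemma th_range: "0 \<le> th s" "th s \<le> 1"
proof -
  have "0 \<le> th s \<and> th s \<le> 1"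
  proof (cases "s \<le> 0 \<or> 1 \<le> s")
    case True then show ?thesis by (auto simp: th_def)
  next
    case False
    then have s: "0 < s" "s < 1" by auto
    have e: "1 - 3 * s^2 + 2 * s^3 = (1 - s)^2 * (1 + 2 * s)" by (simp add: power2_eq_square power3_eq_cube algebra_simps)
    have "0 \<le> (1 - s)^2 * (1 + 2 * s)" using s by simp
    moreover have "1 - 3 * s^2 + 2 * s^3 \<le> 1" using s by (simp add: power2_eq_square power3_eq_cube)
    ultimately show ?thesis using s e by (simp add: th_def)
  qed
  then show "0 \<le> th s" "th s \<le> 1" by auto
qed

lemma th_neg: "s \<le> 0 \<Longrightarrow> th s = 1" and th_big: "1 \<le> s \<Longrightarrow> th s = 0"
  by (auto simp: th_def)

definition Pd :: "('a::euclidean_space \<Rightarrow> real) \<Rightarrow> ('a \<Rightarrow> real) \<Rightarrow> 'a \<Rightarrow> real" where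
  "Pd f g x = (\<Sum>b\<in>Basis. dd [b] f x * dd [b] g x)"

lemma smooth_C2: assumes "smooth f" shows "C2 f"
proof -
  have d0: "\<forall>x. f differentiable (at x)" using smooth_diff[OF assms] by blast
  have d1: "\<forall>x. dd [b] f differentiable (at x)" if "b \<in> Basis" for b
    using assms that unfolding smooth_def by (metis empty_subsetI insert_subset list.set(1) list.set(2))
  have d2: "\<forall>x. dd [b, c] f differentiable (at x)" if "b \<in> Basis" "c \<in> Basis" for b c
  proof -
    have "set [b, c] \<subseteq> Basis" using that by simp
    then show ?thesis using assms unfolding smooth_def by blast
  qed
  show ?thesis unfolding C2_def using d0 d1 d2 diff_cont by blast
qed

lemma periodic_dd:
  assumes "periodic f" "\<forall>x. f differentiable (at x)"
  shows "periodic (dd [b] f)"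
  unfolding periodic_def
proof (intro allI ballI)
  fix x :: 'a and c :: 'a assume c: "c \<in> Basis"
  have "\<And>y. f (y + c) = f y" using assms(1) c unfolding periodic_def by blast
  then show "dd [b] f (x + c) = dd [b] f x" using dd_shift assms(2) by blast
qed

lemma periodicD: "periodic f \<Longrightarrow> c \<in> Basis \<Longrightarrow> f (x + c) = f x"
  unfolding periodic_def by blast

lemma c1_const_minus:
  assumes "c1 u" shows "c1 (\<lambda>x. 1 - u x)" and "dd [b] (\<lambda>x. 1 - u x) x = - dd [b] u x"
proof -
  have du: "\<And>x. u differentiable (at x)" using assms c1_def by blast
  have hd: "((\<lambda>x. 1 - u x) has_derivative (\<lambda>h. 0 - frechet_derivative u (at x) h)) (at x)" for x
    by (rule has_derivative_diff[OF has_derivative_const frechet_derivative_works[THEN iffD1, OF du]])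
  have e: "dd [b] (\<lambda>x. 1 - u x) x = - dd [b] u x" for b x
    using fun_cong[OF frechet_derivative_at[OF hd[of x]], of b] by simp
  then show "dd [b] (\<lambda>x. 1 - u x) x = - dd [b] u x" .
  have "continuous_on UNIV (dd [b] (\<lambda>x. 1 - u x))" if "b \<in> Basis" for b
  proof -
    have "dd [b] (\<lambda>x. 1 - u x) = (\<lambda>x. - dd [b] u x)" using e by blast
    then show ?thesis using assms that unfolding c1_def by (simp add: continuous_on_minus)
  qed
  moreover have "(\<lambda>x. 1 - u x) differentiable (at x)" for x using hd differentiableI by blast
  ultimately show "c1 (\<lambda>x. 1 - u x)" unfolding c1_def by blast
qed

lemma chi_facts:
  fixes \<phi> :: "'a::euclidean_space \<Rightarrow> real"
  assumes sm: "smooth \<phi>" and e: "e > 0"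
  shows "c1 (\<lambda>x. th (\<phi> x / e))"
    and "dd [b] (\<lambda>x. th (\<phi> x / e)) x = th' (\<phi> x / e) / e * dd [b] \<phi> x"
proof -
  have dphi: "\<And>x. \<phi> differentiable (at x)" using smooth_diff[OF sm] .
  have hd: "((\<lambda>x. th (\<phi> x / e)) has_derivative (\<lambda>h. th' (\<phi> x / e) * (frechet_derivative \<phi> (at x) h / e))) (at x)" for x
  proof -
    have a: "((\<lambda>x. \<phi> x / e) has_derivative (\<lambda>h. frechet_derivative \<phi> (at x) h / e)) (at x)"
    proof -
      from frechet_derivative_works[THEN iffD1, OF dphi]
      have "((\<lambda>y. \<phi> y * inverse e) has_derivative (\<lambda>h. frechet_derivative \<phi> (at x) h * inverse e)) (at x)"
        by (rule has_derivative_mult_left)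
      then show ?thesis by (simp add: divide_inverse)
    qed
    have b: "(th has_derivative (\<lambda>h. th' (\<phi> x / e) * h)) (at (\<phi> x / e))"
      using th_deriv[of "\<phi> x / e"] by (simp add: has_field_derivative_def)
    from has_derivative_compose[OF a b] show ?thesis .
  qed
  have e1: "dd [b] (\<lambda>x. th (\<phi> x / e)) x = th' (\<phi> x / e) / e * dd [b] \<phi> x" for b x
    using fun_cong[OF frechet_derivative_at[OF hd[of x]], of b] by simp
  then show "dd [b] (\<lambda>x. th (\<phi> x / e)) x = th' (\<phi> x / e) / e * dd [b] \<phi> x" .
  have cphi: "continuous_on UNIV \<phi>" using dphi diff_cont by blast
  have "continuous_on UNIV (dd [b] (\<lambda>x. th (\<phi> x / e)))" if "b \<in> Basis" for b
  proof -
    have "dd [b] (\<lambda>x. th (\<phi> x / e)) = (\<lambda>x. th' (\<phi> x / e) / e * dd [b] \<phi> x)" using e1 by blast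
    moreover have "continuous_on UNIV (dd [b] \<phi>)" using C2_facts(3)[OF smooth_C2[OF sm] that] .
    moreover have "continuous_on UNIV (\<lambda>x. th' (\<phi> x / e))"
      by (rule continuous_on_compose2[OF th_cont]) (use cphi e in \<open>auto intro!: continuous_intros\<close>)
    ultimately show ?thesis using e by (auto intro!: continuous_intros)
  qed
  moreover have "(\<lambda>x. th (\<phi> x / e)) differentiable (at x)" for x using hd differentiableI by blast
  ultimately show "c1 (\<lambda>x. th (\<phi> x / e))" unfolding c1_def by blast
qed

definition ep :: "nat \<Rightarrow> real" where "ep n = inverse (real (Suc n))"
definition chi :: "('a::euclidean_space \<Rightarrow> real) \<Rightarrow> nat \<Rightarrow> 'a \<Rightarrow> real" where
  "chi \<phi> n x = th (\<phi> x / ep n)"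
definition kap :: "('a::euclidean_space \<Rightarrow> real) \<Rightarrow> nat \<Rightarrow> 'a \<Rightarrow> real" where
  "kap \<phi> n x = th' (\<phi> x / ep n) / ep n"
definition Aint :: "('a::euclidean_space \<Rightarrow> real) \<Rightarrow> nat \<Rightarrow> ('a \<Rightarrow> real) \<Rightarrow> ('a \<Rightarrow> real) \<Rightarrow> ('a \<Rightarrow> real) \<Rightarrow> ('a \<Rightarrow> real) \<Rightarrow> real" where
  "Aint \<phi> n h1 h2 g1 g2 = cint (\<lambda>x. chi \<phi> n x * h1 x * (- laplacian g1 x) + (1 - chi \<phi> n x) * h2 x * (- laplacian g2 x))"

lemma ep_pos: "ep n > 0" unfolding ep_def by simp

lemma cint_cong: "(\<And>x. f x = g x) \<Longrightarrow> cint f = cint g" unfolding cint_def by simp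

lemma cint_minus: "cint (\<lambda>x. - f x) = - cint f" unfolding cint_def by simp

lemma cint_diff:
  assumes "continuous_on UNIV f" "continuous_on UNIV g"
  shows "cint (\<lambda>x. f x - g x) = cint f - cint g"
  unfolding cint_def using int_cube[OF assms(1)] int_cube[OF assms(2)] by (simp add: right_diff_distrib)

lemma cint_mono:
  assumes "continuous_on UNIV f" "continuous_on UNIV g" "\<And>x. f x \<le> g x"
  shows "cint f \<le> cint g"
  unfolding cint_def using int_cube[OF assms(1)] int_cube[OF assms(2)] assms(3)
  by (intro integral_mono) (auto simp: indicator_def)

lemma lap_cont: "C2 g \<Longrightarrow> continuous_on UNIV (laplacian g)"
  unfolding laplacian_def using C2_facts(5) by (intro continuous_on_sum) blast

lemma Pd_cont: "c1 f \<Longrightarrow> c1 g \<Longrightarrow> continuous_on UNIV (Pd f g)"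
  unfolding Pd_def c1_def by (intro continuous_on_sum continuous_on_mult) auto

lemma chi_c1: "smooth \<phi> \<Longrightarrow> c1 (chi \<phi> n)"
  using chi_facts(1)[OF _ ep_pos] unfolding chi_def by (metis)

lemma dd_chi: "smooth \<phi> \<Longrightarrow> dd [b] (chi \<phi> n) x = kap \<phi> n x * dd [b] \<phi> x"
  using chi_facts(2)[OF _ ep_pos] unfolding chi_def kap_def by (metis)

lemma chi_periodic: "periodic \<phi> \<Longrightarrow> periodic (chi \<phi> n)"
  unfolding periodic_def chi_def by simp

lemma A_formula:
  fixes \<phi> :: "'a::euclidean_space \<Rightarrow> real"
  assumes sm: "smooth \<phi>" and pphi: "periodic \<phi>"
    and h: "C2 h1" "C2 h2" "periodic h1" "periodic h2"
    and g: "C2 g1" "C2 g2" "periodic g1" "periodic g2"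
  shows "Aint \<phi> n h1 h2 g1 g2 = cint (\<lambda>x. chi \<phi> n x * Pd h1 g1 x + (1 - chi \<phi> n x) * Pd h2 g2 x
            + kap \<phi> n x * (h1 x * Pd \<phi> g1 x - h2 x * Pd \<phi> g2 x))"
proof -
  define u1 where "u1 x = chi \<phi> n x * h1 x" for x
  define u2 where "u2 x = (1 - chi \<phi> n x) * h2 x" for x
  have cc: "c1 (chi \<phi> n)" using chi_c1[OF sm] .
  have u1c: "c1 u1" unfolding u1_def by (rule c1_mult[OF cc C2_c1[OF h(1)]])
  have u2c: "c1 u2" unfolding u2_def by (rule c1_mult[OF c1_const_minus(1)[OF cc] C2_c1[OF h(2)]])
  have pc: "periodic (chi \<phi> n)" using chi_periodic[OF pphi] .
  have u1p: "periodic u1" using pc h(3) unfolding periodic_def u1_def by simp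
  have u2p: "periodic u2" using pc h(4) unfolding periodic_def u2_def by simp
  have i1: "cint (\<lambda>x. u1 x * laplacian g1 x) = - cint (Pd u1 g1)"
    using ibp[OF u1c u1p g(1) g(3)] unfolding Pd_def by simp
  have i2: "cint (\<lambda>x. u2 x * laplacian g2 x) = - cint (Pd u2 g2)"
    using ibp[OF u2c u2p g(2) g(4)] unfolding Pd_def by simp
  have dchi: "\<And>x. chi \<phi> n differentiable (at x)" using cc unfolding c1_def by blast
  have dh1: "\<And>x. h1 differentiable (at x)" and dh2: "\<And>x. h2 differentiable (at x)"
    using C2_facts(1)[OF h(1)] C2_facts(1)[OF h(2)] by blast+
  have d1mchi: "\<And>x. (\<lambda>x. 1 - chi \<phi> n x) differentiable (at x)"
    using c1_const_minus(1)[OF cc] unfolding c1_def by blast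
  have pw1: "Pd u1 g1 x = kap \<phi> n x * (h1 x * Pd \<phi> g1 x) + chi \<phi> n x * Pd h1 g1 x" for x
  proof -
    have "dd [b] u1 x = kap \<phi> n x * dd [b] \<phi> x * h1 x + chi \<phi> n x * dd [b] h1 x" for b
      unfolding u1_def using dd_mult[OF dchi[of x] dh1[of x], of b] dd_chi[OF sm, of b n x] by simp
    then show ?thesis unfolding Pd_def
      by (simp add: sum_distrib_left sum.distrib[symmetric] algebra_simps)
  qed
  have pw2: "Pd u2 g2 x = - kap \<phi> n x * (h2 x * Pd \<phi> g2 x) + (1 - chi \<phi> n x) * Pd h2 g2 x" for x
  proof -
    have D: "dd [b] u2 x = - (kap \<phi> n x * dd [b] \<phi> x) * h2 x + (1 - chi \<phi> n x) * dd [b] h2 x" for b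
      unfolding u2_def using dd_mult[OF d1mchi[of x] dh2[of x], of b] c1_const_minus(2)[OF cc, of b x] dd_chi[OF sm, of b n x] by simp
    have "Pd u2 g2 x = (\<Sum>b\<in>Basis. (- kap \<phi> n x * h2 x) * (dd [b] \<phi> x * dd [b] g2 x) + (1 - chi \<phi> n x) * (dd [b] h2 x * dd [b] g2 x))"
      unfolding Pd_def by (rule sum.cong[OF refl]) (simp only: D, simp add: algebra_simps)
    also have "\<dots> = (- kap \<phi> n x * h2 x) * (\<Sum>b\<in>Basis. dd [b] \<phi> x * dd [b] g2 x) + (1 - chi \<phi> n x) * (\<Sum>b\<in>Basis. dd [b] h2 x * dd [b] g2 x)"
      by (simp only: sum.distrib sum_distrib_left)
    finally show ?thesis unfolding Pd_def by simp
  qed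
  have cu1: "continuous_on UNIV (\<lambda>x. u1 x * laplacian g1 x)"
    using c1_cont[OF u1c] lap_cont[OF g(1)] by (intro continuous_on_mult)
  have cu2: "continuous_on UNIV (\<lambda>x. u2 x * laplacian g2 x)"
    using c1_cont[OF u2c] lap_cont[OF g(2)] by (intro continuous_on_mult)
  have "Aint \<phi> n h1 h2 g1 g2 = cint (\<lambda>x. - (u1 x * laplacian g1 x) - u2 x * laplacian g2 x)"
    unfolding Aint_def u1_def u2_def by (rule cint_cong) (simp add: algebra_simps)
  also have "\<dots> = cint (\<lambda>x. - (u1 x * laplacian g1 x)) - cint (\<lambda>x. u2 x * laplacian g2 x)"
    by (rule cint_diff) (use cu1 cu2 in \<open>auto intro: continuous_on_minus\<close>)
  also have "\<dots> = cint (Pd u1 g1) + cint (Pd u2 g2)" unfolding cint_minus i1 i2 by simp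
  also have "\<dots> = cint (\<lambda>x. Pd u1 g1 x + Pd u2 g2 x)"
    by (rule cint_add[symmetric]) (use Pd_cont u1c u2c C2_c1 g in auto)
  also have "\<dots> = cint (\<lambda>x. chi \<phi> n x * Pd h1 g1 x + (1 - chi \<phi> n x) * Pd h2 g2 x
            + kap \<phi> n x * (h1 x * Pd \<phi> g1 x - h2 x * Pd \<phi> g2 x))"
    by (rule cint_cong) (simp add: pw1 pw2 algebra_simps)
  finally show ?thesis .
qed

lemma convex_bound:
  fixes t a c :: real
  assumes "0 \<le> t" "t \<le> 1"
  shows "\<bar>t * a + (1 - t) * c\<bar> \<le> \<bar>a\<bar> + \<bar>c\<bar>"
proof -
  have "\<bar>t * a\<bar> \<le> \<bar>a\<bar>" using assms by (simp add: abs_mult mult_left_le_one_le)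
  moreover have "\<bar>(1 - t) * c\<bar> \<le> \<bar>c\<bar>" using assms by (simp add: abs_mult mult_left_le_one_le)
  ultimately show ?thesis by (meson abs_triangle_ineq add_mono order_trans)
qed

lemma Lambda_borel:
  assumes "defining_function \<phi> \<Lambda>"
  shows "\<Lambda> \<in> sets borel"
proof -
  have L: "\<Lambda> = unit_cube \<inter> {x. \<phi> x \<le> 0}" using assms unfolding defining_function_def by auto
  have "continuous_on UNIV \<phi>" using assms smooth_diff diff_cont unfolding defining_function_def by blast
  then have "closed {x. \<phi> x \<le> 0}" using closed_Collect_le[of \<phi> "\<lambda>_. 0"] by (simp add: continuous_on_const)
  then show ?thesis unfolding L using cube_borel by (intro sets.Int[OF cube_borel] borel_closed)
qed

lemma ep_lim: "\<exists>N. \<forall>n\<ge>N. ep n < e" if e: "e > 0"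
proof -
  obtain N where N: "inverse (real (Suc N)) < e" using reals_Archimedean[OF e] by blast
  have "ep n < e" if "n \<ge> N" for n
  proof -
    have "ep n \<le> inverse (real (Suc N))" unfolding ep_def using \<open>n \<ge> N\<close> by (intro le_imp_inverse_le) auto
    then show ?thesis using N by simp
  qed
  then show ?thesis by blast
qed

lemma lim_A:
  fixes \<phi> :: "'a::euclidean_space \<Rightarrow> real"
  assumes df: "defining_function \<phi> \<Lambda>"
    and h: "C2 h1" "C2 h2" and g: "C2 g1" "C2 g2"
  shows "(\<lambda>n. Aint \<phi> n h1 h2 g1 g2) \<longlonglongrightarrow> torus_inner (glue \<Lambda> h1 h2) (\<lambda>x. - L_rob \<Lambda> g1 g2 x)"
proof -
  have sm: "smooth \<phi>" and L: "\<Lambda> = {x\<in>unit_cube. \<phi> x \<le> 0}" using df unfolding defining_function_def by auto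
  have Lb: "\<Lambda> \<in> sets borel" using Lambda_borel[OF df] .
  have ch1: "continuous_on UNIV h1" "continuous_on UNIV h2" using C2_facts(2) h by blast+
  have cg: "continuous_on UNIV (laplacian g1)" "continuous_on UNIV (laplacian g2)" using lap_cont g by blast+
  have cchi: "continuous_on UNIV (chi \<phi> n)" for n using c1_cont[OF chi_c1[OF sm]] .
  define s where "s n x = indicator unit_cube x * (chi \<phi> n x * h1 x * (- laplacian g1 x) + (1 - chi \<phi> n x) * h2 x * (- laplacian g2 x))" for n x
  define f where "f x = indicator unit_cube x * (glue \<Lambda> h1 h2 x * - L_rob \<Lambda> g1 g2 x)" for x
  define w where "w x = indicator unit_cube x * (\<bar>h1 x * laplacian g1 x\<bar> + \<bar>h2 x * laplacian g2 x\<bar>)" for x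
  have A: "Aint \<phi> n h1 h2 g1 g2 = integral\<^sup>L lborel (s n)" for n unfolding Aint_def cint_def s_def ..
  have T: "torus_inner (glue \<Lambda> h1 h2) (\<lambda>x. - L_rob \<Lambda> g1 g2 x) = integral\<^sup>L lborel f"
    unfolding torus_inner_def set_lebesgue_integral_def f_def by simp
  have "(\<lambda>n. integral\<^sup>L lborel (s n)) \<longlonglongrightarrow> integral\<^sup>L lborel f"
  proof (rule integral_dominated_convergence[where w = w])
    have m: "h1 \<in> borel_measurable borel" "h2 \<in> borel_measurable borel"
      "laplacian g1 \<in> borel_measurable borel" "laplacian g2 \<in> borel_measurable borel"
      using ch1 cg by (auto intro: borel_measurable_continuous_onI)
    have mc: "chi \<phi> n \<in> borel_measurable borel" for n using cchi by (rule borel_measurable_continuous_onI)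
    show "f \<in> borel_measurable lborel"
      unfolding f_def glue_def L_rob_def using m Lb cube_borel by measurable
    show "s n \<in> borel_measurable lborel" for n
      unfolding s_def using m mc cube_borel by measurable
    have "continuous_on UNIV (\<lambda>x. \<bar>h1 x * laplacian g1 x\<bar> + \<bar>h2 x * laplacian g2 x\<bar>)"
      using ch1 cg by (intro continuous_intros)
    then show "integrable lborel w" unfolding w_def by (rule int_cube)
    show "AE x in lborel. norm (s n x) \<le> w x" for n
    proof (rule AE_I2)
      fix x
      have "\<bar>chi \<phi> n x * h1 x * (- laplacian g1 x) + (1 - chi \<phi> n x) * h2 x * (- laplacian g2 x)\<bar>
          \<le> \<bar>- (h1 x * laplacian g1 x)\<bar> + \<bar>- (h2 x * laplacian g2 x)\<bar>"
        using convex_bound[of "chi \<phi> n x" "- (h1 x * laplacian g1 x)" "- (h2 x * laplacian g2 x)"] th_range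
        unfolding chi_def by (simp add: algebra_simps)
      then show "norm (s n x) \<le> w x" unfolding s_def w_def by (simp add: indicator_def)
    qed
    show "AE x in lborel. (\<lambda>n. s n x) \<longlonglongrightarrow> f x"
    proof (rule AE_I2)
      fix x
      show "(\<lambda>n. s n x) \<longlonglongrightarrow> f x"
      proof (cases "x \<in> unit_cube")
        case False then show ?thesis unfolding s_def f_def by simp
      next
        case True
        show ?thesis
        proof (cases "\<phi> x \<le> 0")
          case True
          have "chi \<phi> n x = 1" for n unfolding chi_def
            using True ep_pos[of n] by (intro th_neg) (simp add: divide_nonpos_pos)
          moreover have "x \<in> \<Lambda>" using L True \<open>x \<in> unit_cube\<close> by simp
          ultimately show ?thesis unfolding s_def f_def glue_def L_rob_def using \<open>x \<in> unit_cube\<close> by simp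
        next
          case False
          then have px: "\<phi> x > 0" by simp
          obtain N where N: "\<forall>n\<ge>N. ep n < \<phi> x" using ep_lim[OF px] by blast
          have "chi \<phi> n x = 0" if "n \<ge> N" for n
          proof -
            have "ep n < \<phi> x" using N that by blast
            then have "1 \<le> \<phi> x / ep n" using ep_pos[of n] by (simp add: field_simps)
            then show ?thesis unfolding chi_def by (rule th_big)
          qed
          moreover have "x \<notin> \<Lambda>" using L False by simp
          ultimately have "\<forall>n\<ge>N. s n x = f x" unfolding s_def f_def glue_def L_rob_def using \<open>x \<in> unit_cube\<close> by simp
          then have "eventually (\<lambda>n. s n x = f x) sequentially" unfolding eventually_sequentially by blast
          then show ?thesis by (rule tendsto_eventually)
        qed
      qed
    qed
  qed
  then show ?thesis unfolding A T .
qed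

definition Qf :: "('a::euclidean_space \<Rightarrow> real) \<Rightarrow> 'a \<Rightarrow> real" where
  "Qf \<phi> x = norm (grad \<phi> x) * (\<Sum>j\<in>Basis. \<bar>ext_normal \<phi> x \<bullet> j\<bar>)"

lemma Qf_nonneg: "Qf \<phi> x \<ge> 0" unfolding Qf_def by (simp add: sum_nonneg)

lemma robin_zero:
  assumes df: "defining_function \<phi> \<Lambda>" and rp: "rob_pair \<Lambda> (ext_normal \<phi>) h1 h2"
    and x: "x \<in> unit_cube" and z: "\<phi> x = 0"
  shows "Pd \<phi> h1 x = Qf \<phi> x * (h2 x - h1 x)" "Pd \<phi> h2 x = Qf \<phi> x * (h2 x - h1 x)"
proof -
  have fr: "x \<in> torus_top frontier_of \<Lambda>" using frontier_pt[OF df x z] .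
  have gz: "grad \<phi> x \<noteq> 0" using df z unfolding defining_function_def by blast
  define S where "S = (\<Sum>j\<in>Basis. \<bar>ext_normal \<phi> x \<bullet> j\<bar>)"
  have R: "grad h1 x \<bullet> ext_normal \<phi> x = (h2 x - h1 x) * S" "grad h2 x \<bullet> ext_normal \<phi> x = (h2 x - h1 x) * S"
    using rp fr unfolding rob_pair_def S_def by blast+
  have key: "Pd \<phi> h x = norm (grad \<phi> x) * (grad h x \<bullet> ext_normal \<phi> x)" for h
  proof -
    have "Pd \<phi> h x = grad \<phi> x \<bullet> grad h x" unfolding Pd_def grad_inner ..
    also have "\<dots> = norm (grad \<phi> x) * (grad h x \<bullet> ext_normal \<phi> x)"
      unfolding ext_normal_def using gz by (simp add: inner_commute)
    finally show ?thesis .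
  qed
  show "Pd \<phi> h1 x = Qf \<phi> x * (h2 x - h1 x)" "Pd \<phi> h2 x = Qf \<phi> x * (h2 x - h1 x)"
    unfolding key R Qf_def S_def by (simp_all add: algebra_simps)
qed

lemma cint_cmult: "cint (\<lambda>x. c * f x) = c * cint f"
  unfolding cint_def by (simp add: mult.left_commute)

lemma kap_le: "kap \<phi> n x \<le> 0"
  unfolding kap_def using th'_le ep_pos by (simp add: divide_nonpos_pos)

lemma kap_supp: "kap \<phi> n x \<noteq> 0 \<Longrightarrow> 0 < \<phi> x \<and> \<phi> x < ep n"
proof -
  assume "kap \<phi> n x \<noteq> 0"
  then have "th' (\<phi> x / ep n) \<noteq> 0" unfolding kap_def by auto
  then have "0 < \<phi> x / ep n \<and> \<phi> x / ep n < 1" by (rule th'_supp)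
  then show ?thesis using ep_pos[of n] by (simp add: field_simps zero_less_divide_iff)
qed

lemma kap_cont: "continuous_on UNIV \<phi> \<Longrightarrow> continuous_on UNIV (kap \<phi> n)"
proof -
  assume c: "continuous_on UNIV \<phi>"
  have "continuous_on UNIV (\<lambda>x. th' (\<phi> x / ep n))"
    by (rule continuous_on_compose2[OF th_cont]) (use c ep_pos[of n] in \<open>auto intro!: continuous_intros\<close>)
  then show ?thesis unfolding kap_def using ep_pos[of n] by (auto intro!: continuous_intros)
qed

lemma key_est:
  fixes \<phi> F :: "'a::euclidean_space \<Rightarrow> real"
  assumes df: "defining_function \<phi> \<Lambda>" and cF: "continuous_on UNIV F" and pF: "periodic F"
    and zF: "\<forall>x\<in>unit_cube. \<phi> x = 0 \<longrightarrow> F x \<le> 0" and d: "\<delta> > 0"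
  shows "\<exists>N. \<forall>n\<ge>N. cint (\<lambda>x. - kap \<phi> n x * F x) \<le> \<delta>"
proof -
  have pphi: "periodic \<phi>" and sm: "smooth \<phi>" and gz: "\<And>x. \<phi> x = 0 \<Longrightarrow> grad \<phi> x \<noteq> 0"
    using df unfolding defining_function_def by auto
  have C2p: "C2 \<phi>" using smooth_C2[OF sm] .
  note pf = C2_facts[OF C2p]
  have cphi: "continuous_on UNIV \<phi>" using pf(2) .
  have cPd: "continuous_on UNIV (Pd \<phi> \<phi>)" using Pd_cont C2_c1[OF C2p] by blast
  have pPd: "periodic (Pd \<phi> \<phi>)"
  proof -
    have "periodic (dd [b] \<phi>)" for b using periodic_dd[OF pphi pf(1)] .
    then show ?thesis unfolding periodic_def Pd_def by simp
  qed
  have "\<exists>e>0. \<forall>x. \<bar>\<phi> x\<bar> < e \<longrightarrow> Pd \<phi> \<phi> x > e"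
  proof (rule compact_level[OF pphi pPd cphi cPd])
    show "\<forall>x\<in>unit_cube. \<phi> x = 0 \<longrightarrow> 0 < Pd \<phi> \<phi> x"
      using gz unfolding Pd_def grad_inner[symmetric] by simp
  qed
  then obtain e0 where e0: "e0 > 0" "\<And>x. \<bar>\<phi> x\<bar> < e0 \<Longrightarrow> Pd \<phi> \<phi> x > e0" by blast
  define C0 where "C0 = cint (\<lambda>x. \<bar>laplacian \<phi> x\<bar>)"
  have clap: "continuous_on UNIV (laplacian \<phi>)" using lap_cont[OF C2p] .
  have C0: "C0 \<ge> 0" unfolding C0_def using cint_mono[of "\<lambda>x. 0" "\<lambda>x. \<bar>laplacian \<phi> x\<bar>"] clap
    by (simp add: continuous_on_const continuous_on_rabs cint_def)
  define d' where "d' = \<delta> * e0 / (C0 + 1)"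
  have d': "d' > 0" unfolding d'_def using d e0 C0 by simp
  have "\<exists>e>0. \<forall>x. \<bar>\<phi> x\<bar> < e \<longrightarrow> d' - F x > e"
  proof (rule compact_level[OF pphi _ cphi])
    show "periodic (\<lambda>x. d' - F x)" using pF unfolding periodic_def by simp
    show "continuous_on UNIV (\<lambda>x. d' - F x)" using cF by (intro continuous_intros)
    show "\<forall>x\<in>unit_cube. \<phi> x = 0 \<longrightarrow> 0 < d' - F x" using zF d' by force
  qed
  then obtain e1 where e1: "e1 > 0" "\<And>x. \<bar>\<phi> x\<bar> < e1 \<Longrightarrow> d' - F x > e1" by blast
  obtain N where N: "\<forall>n\<ge>N. ep n < min e0 e1" using ep_lim[of "min e0 e1"] e0 e1 by auto
  have "cint (\<lambda>x. - kap \<phi> n x * F x) \<le> \<delta>" if n: "n \<ge> N" for n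
  proof -
    have en: "ep n < e0" "ep n < e1" using N n by auto
    have ck: "continuous_on UNIV (kap \<phi> n)" using kap_cont[OF cphi] .
    have pw1: "- kap \<phi> n x * F x \<le> - kap \<phi> n x * d'" for x
    proof (cases "kap \<phi> n x = 0")
      case False
      then have "0 < \<phi> x" "\<phi> x < ep n" using kap_supp by blast+
      then have "\<bar>\<phi> x\<bar> < e1" using en by simp
      then have "F x \<le> d'" using e1(2) e1(1) by fastforce
      then show ?thesis using kap_le[of \<phi> n x] by (intro mult_left_mono) auto
    qed simp
    have pw2: "- kap \<phi> n x \<le> (1 / e0) * (- kap \<phi> n x * Pd \<phi> \<phi> x)" for x
    proof (cases "kap \<phi> n x = 0")
      case False
      then have "0 < \<phi> x" "\<phi> x < ep n" using kap_supp by blast+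
      then have "\<bar>\<phi> x\<bar> < e0" using en by simp
      then have "1 \<le> Pd \<phi> \<phi> x / e0" using e0 by (simp add: field_simps less_imp_le)
      then have "- kap \<phi> n x * 1 \<le> - kap \<phi> n x * (Pd \<phi> \<phi> x / e0)"
        using kap_le[of \<phi> n x] by (intro mult_left_mono) auto
      also have "\<dots> = (1 / e0) * (- kap \<phi> n x * Pd \<phi> \<phi> x)" by simp
      finally show ?thesis by simp
    qed simp
    have ibpphi: "cint (\<lambda>x. - kap \<phi> n x * Pd \<phi> \<phi> x) = cint (\<lambda>x. chi \<phi> n x * laplacian \<phi> x)"
    proof -
      have "cint (\<lambda>x. chi \<phi> n x * laplacian \<phi> x) = - cint (\<lambda>x. \<Sum>b\<in>Basis. dd [b] (chi \<phi> n) x * dd [b] \<phi> x)"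
        using ibp[OF chi_c1[OF sm] chi_periodic[OF pphi] C2p pphi] .
      also have "\<dots> = - cint (\<lambda>x. kap \<phi> n x * Pd \<phi> \<phi> x)"
        unfolding Pd_def by (simp only: dd_chi[OF sm] sum_distrib_left mult.assoc)
      finally show ?thesis using cint_minus[of "\<lambda>x. kap \<phi> n x * Pd \<phi> \<phi> x"] by simp
    qed
    have cchi: "continuous_on UNIV (chi \<phi> n)" using c1_cont[OF chi_c1[OF sm]] .
    have s1: "cint (\<lambda>x. - kap \<phi> n x * F x) \<le> cint (\<lambda>x. d' * (- kap \<phi> n x))"
    proof (rule cint_mono)
      show "- kap \<phi> n x * F x \<le> d' * (- kap \<phi> n x)" for x using pw1[of x] by (simp add: mult.commute)
      show "continuous_on UNIV (\<lambda>x. - kap \<phi> n x * F x)"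
        using ck cF by (intro continuous_on_mult continuous_on_minus)
      show "continuous_on UNIV (\<lambda>x. d' * (- kap \<phi> n x))"
        using ck by (intro continuous_on_mult continuous_on_const continuous_on_minus)
    qed
    have s1': "cint (\<lambda>x. d' * (- kap \<phi> n x)) = d' * cint (\<lambda>x. - kap \<phi> n x)" by (rule cint_cmult)
    have s2: "cint (\<lambda>x. - kap \<phi> n x) \<le> cint (\<lambda>x. (1 / e0) * (- kap \<phi> n x * Pd \<phi> \<phi> x))"
    proof (rule cint_mono[OF _ _ pw2])
      show "continuous_on UNIV (\<lambda>x. - kap \<phi> n x)" using ck by (rule continuous_on_minus)
      show "continuous_on UNIV (\<lambda>x. (1 / e0) * (- kap \<phi> n x * Pd \<phi> \<phi> x))"
        using ck cPd by (intro continuous_on_mult continuous_on_const continuous_on_minus)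
    qed
    have s2': "cint (\<lambda>x. (1 / e0) * (- kap \<phi> n x * Pd \<phi> \<phi> x)) = (1 / e0) * cint (\<lambda>x. chi \<phi> n x * laplacian \<phi> x)"
      unfolding cint_cmult ibpphi ..
    have s3: "cint (\<lambda>x. chi \<phi> n x * laplacian \<phi> x) \<le> C0"
      unfolding C0_def
    proof (rule cint_mono)
      show "continuous_on UNIV (\<lambda>x. chi \<phi> n x * laplacian \<phi> x)" using cchi clap by (intro continuous_intros)
      show "continuous_on UNIV (\<lambda>x. \<bar>laplacian \<phi> x\<bar>)" using clap by (intro continuous_intros)
      fix x
      have "0 \<le> chi \<phi> n x" "chi \<phi> n x \<le> 1" unfolding chi_def using th_range by auto
      then have "\<bar>chi \<phi> n x * laplacian \<phi> x\<bar> \<le> \<bar>laplacian \<phi> x\<bar>" by (simp add: abs_mult mult_left_le_one_le)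
      then show "chi \<phi> n x * laplacian \<phi> x \<le> \<bar>laplacian \<phi> x\<bar>" by simp
    qed
    have "(1 / e0) * cint (\<lambda>x. chi \<phi> n x * laplacian \<phi> x) \<le> (1 / e0) * C0"
      using s3 e0 by (intro mult_left_mono) auto
    then have "cint (\<lambda>x. - kap \<phi> n x) \<le> (1 / e0) * C0" using s2 s2' by linarith
    then have "d' * cint (\<lambda>x. - kap \<phi> n x) \<le> d' * ((1 / e0) * C0)" using d' by (intro mult_left_mono) auto
    then have "cint (\<lambda>x. - kap \<phi> n x * F x) \<le> d' * ((1 / e0) * C0)" using s1 s1' by linarith
    also have "\<dots> = \<delta> * (C0 / (C0 + 1))" unfolding d'_def using e0 C0 by (simp add: field_simps)
    also have "\<dots> \<le> \<delta> * 1" using d C0 by (intro mult_left_mono) auto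
    finally show ?thesis by simp
  qed
  then show ?thesis by blast
qed

lemma Pd_periodic:
  assumes "periodic f" "periodic g" "\<forall>x. f differentiable (at x)" "\<forall>x. g differentiable (at x)"
  shows "periodic (Pd f g)"
proof -
  have "periodic (dd [b] f)" "periodic (dd [b] g)" for b using periodic_dd assms by blast+
  then show ?thesis unfolding periodic_def Pd_def by simp
qed

lemma Pd_sym: "Pd f g x = Pd g f x" unfolding Pd_def by (simp add: mult.commute)

lemma Pd_self_nonneg: "Pd f f x \<ge> 0" unfolding Pd_def by (intro sum_nonneg) simp

lemma rob_facts:
  assumes "rob_pair \<Lambda> \<zeta> h1 h2"
  shows "periodic h1" "periodic h2" "C2 h1" "C2 h2"
  using assms unfolding rob_pair_def by auto

lemma sym_part:
  fixes \<phi> :: "'a::euclidean_space \<Rightarrow> real"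
  assumes df: "defining_function \<phi> \<Lambda>"
    and rh: "rob_pair \<Lambda> (ext_normal \<phi>) h1 h2" and rg: "rob_pair \<Lambda> (ext_normal \<phi>) g1 g2"
  shows "torus_inner (glue \<Lambda> h1 h2) (\<lambda>x. - L_rob \<Lambda> g1 g2 x) = torus_inner (\<lambda>x. - L_rob \<Lambda> h1 h2 x) (glue \<Lambda> g1 g2)"
proof -
  have pphi: "periodic \<phi>" and sm: "smooth \<phi>" using df unfolding defining_function_def by auto
  have C2p: "C2 \<phi>" using smooth_C2[OF sm] .
  note h = rob_facts[OF rh] and g = rob_facts[OF rg]
  define B1 where "B1 x = h1 x * Pd \<phi> g1 x - h2 x * Pd \<phi> g2 x" for x
  define B2 where "B2 x = g1 x * Pd \<phi> h1 x - g2 x * Pd \<phi> h2 x" for x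
  define E where "E x = B1 x - B2 x" for x
  have cc: "c1 \<phi>" "c1 h1" "c1 h2" "c1 g1" "c1 g2" using C2_c1 C2p h g by blast+
  have ct: "continuous_on UNIV h1" "continuous_on UNIV h2" "continuous_on UNIV g1" "continuous_on UNIV g2"
    using c1_cont cc by blast+
  have cphi: "continuous_on UNIV \<phi>" using c1_cont cc by blast
  have cB1: "continuous_on UNIV B1" unfolding B1_def
    using ct Pd_cont[OF cc(1) cc(4)] Pd_cont[OF cc(1) cc(5)] by (intro continuous_intros)
  have cB2: "continuous_on UNIV B2" unfolding B2_def
    using ct Pd_cont[OF cc(1) cc(2)] Pd_cont[OF cc(1) cc(3)] by (intro continuous_intros)
  have cE: "continuous_on UNIV E" unfolding E_def using cB1 cB2 by (intro continuous_intros)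
  have diffs: "\<forall>x. \<phi> differentiable (at x)" "\<forall>x. h1 differentiable (at x)" "\<forall>x. h2 differentiable (at x)"
    "\<forall>x. g1 differentiable (at x)" "\<forall>x. g2 differentiable (at x)"
    using cc unfolding c1_def by blast+
  have pP: "periodic (Pd \<phi> h1)" "periodic (Pd \<phi> h2)" "periodic (Pd \<phi> g1)" "periodic (Pd \<phi> g2)"
    using Pd_periodic pphi h g diffs by blast+
  have pE: "periodic E"
    using pP h(1,2) g(1,2) unfolding periodic_def E_def B1_def B2_def by simp
  have zE: "E x = 0" if "x \<in> unit_cube" "\<phi> x = 0" for x
  proof -
    note rzh = robin_zero[OF df rh that] and rzg = robin_zero[OF df rg that]
    show ?thesis unfolding E_def B1_def B2_def rzh rzg by (simp add: algebra_simps)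
  qed
  define bulk where "bulk n x = chi \<phi> n x * Pd h1 g1 x + (1 - chi \<phi> n x) * Pd h2 g2 x" for n x
  have cbulk: "continuous_on UNIV (bulk n)" for n
    unfolding bulk_def using c1_cont[OF chi_c1[OF sm]] Pd_cont cc by (intro continuous_intros) auto
  have ck: "continuous_on UNIV (kap \<phi> n)" for n using kap_cont[OF cphi] .
  have Ah: "Aint \<phi> n h1 h2 g1 g2 = cint (\<lambda>x. bulk n x + kap \<phi> n x * B1 x)" for n
    using A_formula[OF sm pphi h(3,4,1,2) g(3,4,1,2)] unfolding bulk_def B1_def .
  have Ag: "Aint \<phi> n g1 g2 h1 h2 = cint (\<lambda>x. bulk n x + kap \<phi> n x * B2 x)" for n
    using A_formula[OF sm pphi g(3,4,1,2) h(3,4,1,2)] unfolding bulk_def B2_def by (simp add: Pd_sym)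
  have Adiff: "Aint \<phi> n h1 h2 g1 g2 - Aint \<phi> n g1 g2 h1 h2 = cint (\<lambda>x. kap \<phi> n x * E x)" for n
  proof -
    have "cint (\<lambda>x. bulk n x + kap \<phi> n x * B1 x) - cint (\<lambda>x. bulk n x + kap \<phi> n x * B2 x)
        = cint (\<lambda>x. (bulk n x + kap \<phi> n x * B1 x) - (bulk n x + kap \<phi> n x * B2 x))"
      by (rule cint_diff[symmetric]) (use cbulk ck cB1 cB2 in \<open>auto intro!: continuous_intros\<close>)
    also have "\<dots> = cint (\<lambda>x. kap \<phi> n x * E x)" unfolding E_def by (rule cint_cong) (simp add: algebra_simps)
    finally show ?thesis unfolding Ah Ag .
  qed
  have lim0: "(\<lambda>n. cint (\<lambda>x. kap \<phi> n x * E x)) \<longlonglongrightarrow> 0"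
  proof (rule LIMSEQ_I)
    fix r :: real assume r: "r > 0"
    have "\<exists>N. \<forall>n\<ge>N. cint (\<lambda>x. - kap \<phi> n x * E x) \<le> r / 2"
      by (rule key_est[OF df cE pE]) (use zE r in auto)
    then obtain N1 where N1: "\<And>n. n \<ge> N1 \<Longrightarrow> cint (\<lambda>x. - kap \<phi> n x * E x) \<le> r / 2" by blast
    have "\<exists>N. \<forall>n\<ge>N. cint (\<lambda>x. - kap \<phi> n x * (- E x)) \<le> r / 2"
    proof (rule key_est[OF df])
      show "continuous_on UNIV (\<lambda>x. - E x)" using cE by (rule continuous_on_minus)
      show "periodic (\<lambda>x. - E x)" using pE unfolding periodic_def by simp
    qed (use zE r in auto)
    then obtain N2 where N2: "\<And>n. n \<ge> N2 \<Longrightarrow> cint (\<lambda>x. - kap \<phi> n x * (- E x)) \<le> r / 2" by blast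
    have "norm (cint (\<lambda>x. kap \<phi> n x * E x) - 0) < r" if "n \<ge> max N1 N2" for n
    proof -
      have a: "cint (\<lambda>x. - kap \<phi> n x * E x) = - cint (\<lambda>x. kap \<phi> n x * E x)"
        using cint_minus[of "\<lambda>x. kap \<phi> n x * E x"] by simp
      have b: "cint (\<lambda>x. - kap \<phi> n x * (- E x)) = cint (\<lambda>x. kap \<phi> n x * E x)" by simp
      show ?thesis using N1[of n] N2[of n] that r unfolding a b by auto
    qed
    then show "\<exists>no. \<forall>n\<ge>no. norm (cint (\<lambda>x. kap \<phi> n x * E x) - 0) < r" by blast
  qed
  have l1: "(\<lambda>n. Aint \<phi> n h1 h2 g1 g2) \<longlonglongrightarrow> torus_inner (glue \<Lambda> h1 h2) (\<lambda>x. - L_rob \<Lambda> g1 g2 x)"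
    using lim_A[OF df h(3,4) g(3,4)] .
  have l2: "(\<lambda>n. Aint \<phi> n g1 g2 h1 h2) \<longlonglongrightarrow> torus_inner (glue \<Lambda> g1 g2) (\<lambda>x. - L_rob \<Lambda> h1 h2 x)"
    using lim_A[OF df g(3,4) h(3,4)] .
  have "(\<lambda>n. Aint \<phi> n h1 h2 g1 g2 - Aint \<phi> n g1 g2 h1 h2) \<longlonglongrightarrow>
      torus_inner (glue \<Lambda> h1 h2) (\<lambda>x. - L_rob \<Lambda> g1 g2 x) - torus_inner (glue \<Lambda> g1 g2) (\<lambda>x. - L_rob \<Lambda> h1 h2 x)"
    using tendsto_diff[OF l1 l2] .
  moreover have "(\<lambda>n. Aint \<phi> n h1 h2 g1 g2 - Aint \<phi> n g1 g2 h1 h2) \<longlonglongrightarrow> 0"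
    unfolding Adiff using lim0 .
  ultimately have "torus_inner (glue \<Lambda> h1 h2) (\<lambda>x. - L_rob \<Lambda> g1 g2 x) - torus_inner (glue \<Lambda> g1 g2) (\<lambda>x. - L_rob \<Lambda> h1 h2 x) = 0"
    using LIMSEQ_unique by blast
  moreover have "torus_inner (glue \<Lambda> g1 g2) (\<lambda>x. - L_rob \<Lambda> h1 h2 x) = torus_inner (\<lambda>x. - L_rob \<Lambda> h1 h2 x) (glue \<Lambda> g1 g2)"
    unfolding torus_inner_def by (simp add: mult.commute)
  ultimately show ?thesis by simp
qed

lemma pos_part:
  fixes \<phi> :: "'a::euclidean_space \<Rightarrow> real"
  assumes df: "defining_function \<phi> \<Lambda>"
    and rh: "rob_pair \<Lambda> (ext_normal \<phi>) h1 h2"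
  shows "torus_inner (glue \<Lambda> h1 h2) (\<lambda>x. - L_rob \<Lambda> h1 h2 x) \<ge> 0"
proof -
  have pphi: "periodic \<phi>" and sm: "smooth \<phi>" using df unfolding defining_function_def by auto
  have C2p: "C2 \<phi>" using smooth_C2[OF sm] .
  note h = rob_facts[OF rh]
  define W where "W x = h1 x * Pd \<phi> h1 x - h2 x * Pd \<phi> h2 x" for x
  have cc: "c1 \<phi>" "c1 h1" "c1 h2" using C2_c1 C2p h by blast+
  have ct: "continuous_on UNIV h1" "continuous_on UNIV h2" using c1_cont cc by blast+
  have cphi: "continuous_on UNIV \<phi>" using c1_cont cc by blast
  have cW: "continuous_on UNIV W" unfolding W_def
    using ct Pd_cont[OF cc(1) cc(2)] Pd_cont[OF cc(1) cc(3)] by (intro continuous_intros)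
  have diffs: "\<forall>x. \<phi> differentiable (at x)" "\<forall>x. h1 differentiable (at x)" "\<forall>x. h2 differentiable (at x)"
    using cc unfolding c1_def by blast+
  have pP: "periodic (Pd \<phi> h1)" "periodic (Pd \<phi> h2)"
    using Pd_periodic pphi h diffs by blast+
  have pW: "periodic W" using pP h(1,2) unfolding periodic_def W_def by simp
  have zW: "W x \<le> 0" if "x \<in> unit_cube" "\<phi> x = 0" for x
  proof -
    note rzh = robin_zero[OF df rh that]
    have "W x = - (Qf \<phi> x * (h2 x - h1 x)^2)" unfolding W_def rzh by (simp add: algebra_simps power2_eq_square)
    then show ?thesis using Qf_nonneg[of \<phi> x] by simp
  qed
  define bulk where "bulk n x = chi \<phi> n x * Pd h1 h1 x + (1 - chi \<phi> n x) * Pd h2 h2 x" for n x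
  have cbulk: "continuous_on UNIV (bulk n)" for n
    unfolding bulk_def using c1_cont[OF chi_c1[OF sm]] Pd_cont cc by (intro continuous_intros) auto
  have ck: "continuous_on UNIV (kap \<phi> n)" for n using kap_cont[OF cphi] .
  have Ah: "Aint \<phi> n h1 h2 h1 h2 = cint (\<lambda>x. bulk n x + kap \<phi> n x * W x)" for n
    using A_formula[OF sm pphi h(3,4,1,2) h(3,4,1,2)] unfolding bulk_def W_def .
  have bulk_nn: "bulk n x \<ge> 0" for n x
  proof -
    have "0 \<le> chi \<phi> n x" "chi \<phi> n x \<le> 1" unfolding chi_def using th_range by auto
    then show ?thesis unfolding bulk_def using Pd_self_nonneg[of h1 x] Pd_self_nonneg[of h2 x] by simp
  qed
  have l1: "(\<lambda>n. Aint \<phi> n h1 h2 h1 h2) \<longlonglongrightarrow> torus_inner (glue \<Lambda> h1 h2) (\<lambda>x. - L_rob \<Lambda> h1 h2 x)"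
    using lim_A[OF df h(3,4) h(3,4)] .
  have ge: "- \<delta> \<le> torus_inner (glue \<Lambda> h1 h2) (\<lambda>x. - L_rob \<Lambda> h1 h2 x)" if d: "\<delta> > 0" for \<delta>
  proof (rule LIMSEQ_le_const[OF l1])
    have "\<exists>N. \<forall>n\<ge>N. cint (\<lambda>x. - kap \<phi> n x * W x) \<le> \<delta>"
      by (rule key_est[OF df cW pW]) (use zW d in auto)
    then obtain N where N: "\<And>n. n \<ge> N \<Longrightarrow> cint (\<lambda>x. - kap \<phi> n x * W x) \<le> \<delta>" by blast
    have "- \<delta> \<le> Aint \<phi> n h1 h2 h1 h2" if "n \<ge> N" for n
    proof -
      have "cint (\<lambda>x. kap \<phi> n x * W x) \<le> cint (\<lambda>x. bulk n x + kap \<phi> n x * W x)"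
        by (rule cint_mono) (use ck cW cbulk bulk_nn in \<open>auto intro!: continuous_intros\<close>)
      moreover have "cint (\<lambda>x. - kap \<phi> n x * W x) = - cint (\<lambda>x. kap \<phi> n x * W x)"
        using cint_minus[of "\<lambda>x. kap \<phi> n x * W x"] by simp
      ultimately show ?thesis unfolding Ah using N[OF that] by linarith
    qed
    then show "\<exists>N. \<forall>n\<ge>N. - \<delta> \<le> Aint \<phi> n h1 h2 h1 h2" by blast
  qed
  show ?thesis
  proof (rule ccontr)
    assume "\<not> ?thesis"
    then have neg: "torus_inner (glue \<Lambda> h1 h2) (\<lambda>x. - L_rob \<Lambda> h1 h2 x) < 0" by simp
    have "- (- torus_inner (glue \<Lambda> h1 h2) (\<lambda>x. - L_rob \<Lambda> h1 h2 x) / 2) \<le> torus_inner (glue \<Lambda> h1 h2) (\<lambda>x. - L_rob \<Lambda> h1 h2 x)"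
      using neg by (intro ge) simp
    then show False using neg by simp
  qed
qed

theorem proposition7p3:
  fixes \<Lambda> :: "'a::euclidean_space set" and \<phi> :: "'a \<Rightarrow> real"
  assumes "\<Lambda> \<subseteq> unit_cube"
    and "closedin torus_top \<Lambda>"
    and "simply_connected_space (subtopology torus_top \<Lambda>)"
    and "defining_function \<phi> \<Lambda>"
  shows "(\<forall>h1 h2 g1 g2. rob_pair \<Lambda> (ext_normal \<phi>) h1 h2 \<and> rob_pair \<Lambda> (ext_normal \<phi>) g1 g2 \<longrightarrow>
            torus_inner (glue \<Lambda> h1 h2) (\<lambda>x. - L_rob \<Lambda> g1 g2 x)
              = torus_inner (\<lambda>x. - L_rob \<Lambda> h1 h2 x) (glue \<Lambda> g1 g2))
       \<and> (\<forall>h1 h2. rob_pair \<Lambda> (ext_normal \<phi>) h1 h2 \<longrightarrow>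
            torus_inner (glue \<Lambda> h1 h2) (\<lambda>x. - L_rob \<Lambda> h1 h2 x) \<ge> 0)"
  using sym_part[OF assms(4)] pos_part[OF assms(4)] by blast

end
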